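(* Consider the lower-bound construction with parameters $n_1,n_2,d,d_s,x$ where $0<x\le d_s$, $d\ge\max\{d_s\log n_1,\log^2 n_1\}$, $n_1\ge 2d^3$, and the $d$-regular graph on $S_1$ is an expander (its normalized Laplacian has spectral gap bounded below by an absolute constant). Let $r_{S_1}(s,t)$ be the effective resistance between $s$ and $t$ in the subgraph induced on $S_1\cup\{s,t\}$ and $r_{S_2}(s,t)$ the one in the subgraph induced on $S_2\cup\{s,t\}$ (when $x<d_s$). Then $$r_{S_1}(s,t)=\frac1x+O\Big(\frac{\log n_1}{dx}\Big)=\frac1x+O\Big(\frac{1}{d_s x}\Big),\qquad r_{S_2}(s,t)=\frac{2}{d_s-x}.$$
   Context: Lower-bound construction: $S_1$ and $S_2$ are disjoint vertex sets with $|S_1|=n_1$, $|S_2|=n_2$, $n_2\ll n_1$. On $S_1$ there is a $d$-regular expander graph; $S_2$ has no internal edges. A source vertex $s$ is added with $d_s$ neighbors: $x$ vertices $\mathcal{N}_1\subset S_1$ and $d_s-x$ vertices $\mathcal{N}_2\subset S_2$, chosen uniformly at random. A sink vertex $t$ is added and joined to every vertex of $S_1\cup S_2$. There are no other edges (in particular no edge $st$ and no edges between $S_1$ and $S_2$). Effective resistance in a graph $H$ is $(\mathbf{e}_s-\mathbf{e}_t)^T\mathbf{L}_H^\dagger(\mathbf{e}_s-\mathbf{e}_t)$, $\mathbf{L}_H$ the Laplacian of $H$. Constants hidden in $O(\cdot)$ are absolute (may depend on the expansion constant of $S_1$). *)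

theory Defs
  imports Complex_Main
begin

text \<open>Graphs are given by real (0/1) adjacency functions on vertices; all matrices indexed
by a finite vertex set V are functions 'a => 'a => real that vanish outside V x V.\<close>

definition deg :: "'a set \<Rightarrow> ('a \<Rightarrow> 'a \<Rightarrow> real) \<Rightarrow> 'a \<Rightarrow> real" where
  "deg V A u = (\<Sum>w\<in>V. A u w)"

definition lap :: "'a set \<Rightarrow> ('a \<Rightarrow> 'a \<Rightarrow> real) \<Rightarrow> 'a \<Rightarrow> 'a \<Rightarrow> real" where
  "lap V A u v = (if u \<in> V \<and> v \<in> V then (if u = v then deg V A u else 0) - A u v else 0)"

definition norm_lap :: "'a set \<Rightarrow> ('a \<Rightarrow> 'a \<Rightarrow> real) \<Rightarrow> 'a \<Rightarrow> 'a \<Rightarrow> real" where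
  "norm_lap V A u v = (if u \<in> V \<and> v \<in> V then
      (if u = v then 1 else 0) - A u v / sqrt (deg V A u * deg V A v) else 0)"

definition matmul :: "'a set \<Rightarrow> ('a \<Rightarrow> 'a \<Rightarrow> real) \<Rightarrow> ('a \<Rightarrow> 'a \<Rightarrow> real) \<Rightarrow> 'a \<Rightarrow> 'a \<Rightarrow> real" where
  "matmul V M N u v = (\<Sum>w\<in>V. M u w * N w v)"

definition transp_mat :: "('a \<Rightarrow> 'a \<Rightarrow> real) \<Rightarrow> 'a \<Rightarrow> 'a \<Rightarrow> real" where
  "transp_mat M u v = M v u"

definition is_pinv :: "'a set \<Rightarrow> ('a \<Rightarrow> 'a \<Rightarrow> real) \<Rightarrow> ('a \<Rightarrow> 'a \<Rightarrow> real) \<Rightarrow> bool" where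
  "is_pinv V L M \<longleftrightarrow> (\<forall>u v. (u \<notin> V \<or> v \<notin> V) \<longrightarrow> M u v = 0)
     \<and> matmul V (matmul V L M) L = L
     \<and> matmul V (matmul V M L) M = M
     \<and> transp_mat (matmul V L M) = matmul V L M
     \<and> transp_mat (matmul V M L) = matmul V M L"

definition pinv :: "'a set \<Rightarrow> ('a \<Rightarrow> 'a \<Rightarrow> real) \<Rightarrow> 'a \<Rightarrow> 'a \<Rightarrow> real" where
  "pinv V L = (THE M. is_pinv V L M)"

definition eff_res :: "'a set \<Rightarrow> ('a \<Rightarrow> 'a \<Rightarrow> real) \<Rightarrow> 'a \<Rightarrow> 'a \<Rightarrow> real" where
  "eff_res V A s t =
     (let b = (\<lambda>u. (if u = s then 1 else 0) - (if u = t then 1 else 0) :: real)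
      in \<Sum>u\<in>V. \<Sum>v\<in>V. b u * pinv V (lap V A) u v * b v)"

definition is_eigvec :: "'a set \<Rightarrow> ('a \<Rightarrow> 'a \<Rightarrow> real) \<Rightarrow> real \<Rightarrow> ('a \<Rightarrow> real) \<Rightarrow> bool" where
  "is_eigvec V M lam f \<longleftrightarrow> (\<exists>v\<in>V. f v \<noteq> 0) \<and> (\<forall>u\<in>V. (\<Sum>v\<in>V. M u v * f v) = lam * f u)"

text \<open>The second smallest eigenvalue (with multiplicity) of the symmetric matrix M on V is
  at least gamma: the eigenvectors with eigenvalue below gamma span a space of dimension
  at most one.\<close>
definition second_eig_ge :: "'a set \<Rightarrow> ('a \<Rightarrow> 'a \<Rightarrow> real) \<Rightarrow> real \<Rightarrow> bool" where
  "second_eig_ge V M gam \<longleftrightarrow> (\<forall>lam mu f g. is_eigvec V M lam f \<and> is_eigvec V M mu g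
       \<and> lam < gam \<and> mu < gam \<longrightarrow> (\<exists>c. \<forall>u\<in>V. g u = c * f u))"

definition edge_adj :: "('a \<Rightarrow> 'a \<Rightarrow> bool) \<Rightarrow> 'a \<Rightarrow> 'a \<Rightarrow> real" where
  "edge_adj E u v = (if E u v then 1 else 0)"

definition constr_adj :: "'a set \<Rightarrow> 'a set \<Rightarrow> ('a \<Rightarrow> 'a \<Rightarrow> bool) \<Rightarrow> 'a set \<Rightarrow> 'a set
    \<Rightarrow> 'a \<Rightarrow> 'a \<Rightarrow> 'a \<Rightarrow> 'a \<Rightarrow> real" where
  "constr_adj S1 S2 E1 N1 N2 s t u v =
     (if (u \<in> S1 \<and> v \<in> S1 \<and> E1 u v)
         \<or> (u = s \<and> v \<in> N1 \<union> N2) \<or> (v = s \<and> u \<in> N1 \<union> N2)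
         \<or> (u = t \<and> v \<in> S1 \<union> S2) \<or> (v = t \<and> u \<in> S1 \<union> S2) then 1 else 0)"

end

theory Submission
  imports Defs "HOL-Analysis.Analysis"
begin


lemma matmul_assoc:
  assumes "finite V"
  shows "matmul V (matmul V A B) C = matmul V A (matmul V B C)"
proof (intro ext)
  fix u w
  have "matmul V (matmul V A B) C u w = (\<Sum>v\<in>V. \<Sum>z\<in>V. A u z * B z v * C v w)"
    by (simp add: matmul_def sum_distrib_right)
  also have "\<dots> = (\<Sum>z\<in>V. \<Sum>v\<in>V. A u z * B z v * C v w)" by (rule sum.swap)
  also have "\<dots> = matmul V A (matmul V B C) u w"
    by (simp add: matmul_def sum_distrib_left mult.assoc)
  finally show "matmul V (matmul V A B) C u w = matmul V A (matmul V B C) u w" .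
qed

lemma transp_matmul: "transp_mat (matmul V A B) = matmul V (transp_mat B) (transp_mat A)"
  by (intro ext) (simp add: matmul_def transp_mat_def mult.commute)

lemma transp_transp[simp]: "transp_mat (transp_mat A) = A"
  by (intro ext) (simp add: transp_mat_def)

lemma pinv_unique:
  assumes V: "finite V" and 1: "is_pinv V L M1" and 2: "is_pinv V L M2"
  shows "M1 = M2"
proof -
  note as = matmul_assoc[OF V]
  let ?m = "matmul V" and ?T = transp_mat
  from 1 have a1: "?m (?m L M1) L = L" "?m (?m M1 L) M1 = M1" "?T (?m L M1) = ?m L M1" "?T (?m M1 L) = ?m M1 L"
    unfolding is_pinv_def by auto
  from 2 have a2: "?m (?m L M2) L = L" "?m (?m M2 L) M2 = M2" "?T (?m L M2) = ?m L M2" "?T (?m M2 L) = ?m M2 L"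
    unfolding is_pinv_def by auto
  have tL: "?T L = ?m (?m (?T L) (?T M2)) (?T L)"
    by (metis a2(1) transp_matmul as)
  have e1: "M1 = ?m M1 (?m L M2)"
  proof -
    have "M1 = ?m M1 (?m L M1)" using a1(2) as by simp
    also have "\<dots> = ?m M1 (?T (?m L M1))" using a1(3) by simp
    also have "\<dots> = ?m M1 (?m (?T M1) (?T L))" by (simp add: transp_matmul)
    also have "\<dots> = ?m (?m M1 (?T M1)) (?T L)" by (simp add: as)
    also have "\<dots> = ?m (?m M1 (?T M1)) (?m (?m (?T L) (?T M2)) (?T L))" using tL by simp
    also have "\<dots> = ?m M1 (?m (?m (?T M1) (?T L)) (?m (?T M2) (?T L)))" by (simp add: as)
    also have "\<dots> = ?m M1 (?m (?T (?m L M1)) (?T (?m L M2)))" by (simp add: transp_matmul)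
    also have "\<dots> = ?m M1 (?m (?m L M1) (?m L M2))" using a1(3) a2(3) by simp
    also have "\<dots> = ?m (?m (?m M1 L) M1) (?m L M2)" by (simp add: as)
    also have "\<dots> = ?m M1 (?m L M2)" using a1(2) by simp
    finally show ?thesis .
  qed
  have e2: "M2 = ?m (?m M1 L) M2"
  proof -
    have "M2 = ?m (?m M2 L) M2" using a2(2) by simp
    also have "\<dots> = ?m (?T (?m M2 L)) M2" using a2(4) by simp
    also have "\<dots> = ?m (?m (?T L) (?T M2)) M2" by (simp add: transp_matmul)
    also have "\<dots> = ?m (?m (?m (?T L) (?T M1)) (?T L)) (?m (?T M2) M2)" 
    proof -
      have "?T L = ?m (?m (?T L) (?T M1)) (?T L)" by (metis a1(1) transp_matmul as)
      then show ?thesis by (metis as)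
    qed
    also have "\<dots> = ?m (?m (?T (?m M1 L)) (?T (?m M2 L))) M2" by (simp add: transp_matmul as)
    also have "\<dots> = ?m (?m (?m M1 L) (?m M2 L)) M2" using a1(4) a2(4) by simp
    also have "\<dots> = ?m (?m M1 L) (?m (?m M2 L) M2)" by (simp add: as)
    also have "\<dots> = ?m (?m M1 L) M2" using a2(2) by simp
    finally show ?thesis .
  qed
  show ?thesis using e1 e2 by (simp add: as)
qed

lemma pinv_is_pinv:
  assumes "finite V" "is_pinv V L M" shows "pinv V L = M"
  unfolding pinv_def using assms pinv_unique by blast



definition Lmul :: "nat set \<Rightarrow> (nat \<Rightarrow> nat \<Rightarrow> real) \<Rightarrow> (nat \<Rightarrow> real) \<Rightarrow> nat \<Rightarrow> real" where
  "Lmul V A \<phi> u = (\<Sum>v\<in>V. lap V A u v * \<phi> v)"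

lemma Lmul_eq: "u \<in> V \<Longrightarrow> finite V \<Longrightarrow> Lmul V A \<phi> u = deg V A u * \<phi> u - (\<Sum>v\<in>V. A u v * \<phi> v)"
proof -
  assume u: "u \<in> V" and V: "finite V"
  have "Lmul V A \<phi> u = (\<Sum>v\<in>V. (if u = v then deg V A u * \<phi> v else 0) - A u v * \<phi> v)"
    unfolding Lmul_def lap_def using u by (intro sum.cong) (auto simp: algebra_simps)
  also have "\<dots> = deg V A u * \<phi> u - (\<Sum>v\<in>V. A u v * \<phi> v)"
    using u V by (simp add: sum_subtractf)
  finally show ?thesis .
qed

lemma Lmul_lin: "Lmul V A (\<lambda>v. a * f v + b * g v) u = a * Lmul V A f u + b * Lmul V A g u"
  unfolding Lmul_def by (simp add: algebra_simps sum.distrib sum_distrib_left)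

lemma Lmul_const: "finite V \<Longrightarrow> Lmul V A (\<lambda>v. c) u = 0"
proof (cases "u \<in> V")
  case True
  assume "finite V"
  then show ?thesis using True by (simp add: Lmul_eq deg_def sum_distrib_left mult.commute)
next
  case False then show ?thesis by (simp add: Lmul_def lap_def)
qed

lemma Lmul_add_const: "finite V \<Longrightarrow> Lmul V A (\<lambda>v. f v + c) u = Lmul V A f u"
  using Lmul_lin[of V A 1 f 1 "\<lambda>_. c" u] Lmul_const[of V A c u] by simp

lemma lap_sym: "(\<And>u v. A u v = A v u) \<Longrightarrow> lap V A u v = lap V A v u"
  unfolding lap_def by auto

lemma sum_Lmul_sym:
  assumes "finite V" "\<And>u v. A u v = A v u"
  shows "(\<Sum>u\<in>V. g u * Lmul V A f u) = (\<Sum>u\<in>V. f u * Lmul V A g u)"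
proof -
  have "(\<Sum>u\<in>V. g u * Lmul V A f u) = (\<Sum>u\<in>V. \<Sum>v\<in>V. g u * lap V A u v * f v)"
    unfolding Lmul_def by (simp add: sum_distrib_left mult.assoc)
  also have "\<dots> = (\<Sum>v\<in>V. \<Sum>u\<in>V. g u * lap V A u v * f v)" by (rule sum.swap)
  also have "\<dots> = (\<Sum>v\<in>V. f v * Lmul V A g v)"
    unfolding Lmul_def sum_distrib_left
    by (intro sum.cong refl) (simp add: lap_sym[of A, OF assms(2)] mult.commute mult.left_commute)
  finally show ?thesis .
qed

lemma sum_Lmul_zero:
  assumes "finite V" "\<And>u v. A u v = A v u"
  shows "(\<Sum>u\<in>V. Lmul V A f u) = 0"
  using sum_Lmul_sym[OF assms, where g="\<lambda>_. 1" and f=f] Lmul_const[OF assms(1)] by simp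

lemma energy_eq:
  assumes V: "finite V" and sym: "\<And>u v. A u v = A v u"
  shows "(\<Sum>u\<in>V. f u * Lmul V A f u) = (\<Sum>u\<in>V. \<Sum>v\<in>V. A u v * (f u - f v)^2) / 2"
proof -
  have a: "(\<Sum>u\<in>V. f u * Lmul V A f u) = (\<Sum>u\<in>V. \<Sum>v\<in>V. A u v * f u ^ 2) - (\<Sum>u\<in>V. \<Sum>v\<in>V. A u v * f u * f v)"
    using V by (simp add: Lmul_eq deg_def algebra_simps power2_eq_square sum_distrib_left sum_distrib_right sum_subtractf)
  have b: "(\<Sum>u\<in>V. \<Sum>v\<in>V. A u v * f v ^ 2) = (\<Sum>u\<in>V. \<Sum>v\<in>V. A u v * f u ^ 2)"
    by (subst sum.swap) (simp add: sym)
  have "(\<Sum>u\<in>V. \<Sum>v\<in>V. A u v * (f u - f v)^2) = (\<Sum>u\<in>V. \<Sum>v\<in>V. A u v * f u ^ 2) + (\<Sum>u\<in>V. \<Sum>v\<in>V. A u v * f v ^ 2) - 2 * (\<Sum>u\<in>V. \<Sum>v\<in>V. A u v * f u * f v)"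
    by (simp add: power2_diff algebra_simps sum.distrib sum_subtractf sum_distrib_left)
  with a b show ?thesis by simp
qed

lemma energy_nonneg:
  assumes "finite V" "\<And>u v. A u v = A v u" "\<And>u v. A u v \<ge> 0"
  shows "(\<Sum>u\<in>V. f u * Lmul V A f u) \<ge> 0"
  unfolding energy_eq[OF assms(1,2)] using assms(3)
  by (intro divide_nonneg_pos sum_nonneg mult_nonneg_nonneg) auto

lemma energy_zero:
  assumes "finite V" "\<And>u v. A u v = A v u" "\<And>u v. A u v \<ge> 0"
    and "(\<Sum>u\<in>V. f u * Lmul V A f u) = 0" "u \<in> V" "v \<in> V" "A u v \<noteq> 0"
  shows "f u = f v"
proof -
  have z: "(\<Sum>u\<in>V. \<Sum>v\<in>V. A u v * (f u - f v)^2) = 0" using assms(4) energy_eq[OF assms(1,2)] by simp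
  have nn: "\<And>u v. 0 \<le> A u v * (f u - f v)^2" using assms(3) by simp
  have "(\<Sum>v\<in>V. A u v * (f u - f v)^2) = 0"
    using z assms(1,5) by (subst (asm) sum_nonneg_eq_0_iff) (auto intro: sum_nonneg nn)
  then have "A u v * (f u - f v)^2 = 0"
    using assms(1,6) by (subst (asm) sum_nonneg_eq_0_iff) (auto intro: nn)
  then show ?thesis using assms(7) by simp
qed

lemma quad_lin_zero:
  fixes a b :: real
  assumes "\<And>e. 0 \<le> a * e^2 + b * e"
  shows "b = 0"
proof (rule ccontr)
  assume b: "b \<noteq> 0"
  define k where "k = \<bar>a\<bar> + 1"
  define e where "e = - b / k"
  have p: "k > 0" "a - k < 0" unfolding k_def by auto
  have "a * e^2 + b * e = b^2 * (a - k) / k^2"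
    unfolding e_def using p by (simp add: field_simps power2_eq_square)
  also have "\<dots> < 0" using b p
    by (intro divide_neg_pos mult_pos_neg) auto
  finally show False using assms[of e] by simp
qed



definition box :: "nat set \<Rightarrow> real \<Rightarrow> (nat \<Rightarrow> real) set" where
  "box W B = {f. (\<forall>i. i \<notin> W \<longrightarrow> f i = 0) \<and> (\<forall>i. \<bar>f i\<bar> \<le> B)}"

lemma compact_box: "compact (box W B)"
proof -
  define S where "S = (\<lambda>i::nat. if i \<in> W then cball (0::real) B else cball 0 B \<inter> {0})"
  have eq: "box W B = PiE UNIV S"
    unfolding box_def S_def PiE_def Pi_def extensional_def by (auto simp: dist_real_def)
  have "compactin (product_topology (\<lambda>i. euclidean) UNIV) (PiE UNIV S)"
    unfolding compactin_PiE
    by (auto simp: S_def compact_Int_closed intro!: disjI2)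
  then show ?thesis unfolding eq euclidean_product_topology compactin_euclidean_iff .
qed

lemma box_min:
  fixes F :: "(nat \<Rightarrow> real) \<Rightarrow> real"
  assumes "closed C" "continuous_on UNIV F" "f0 \<in> box W B \<inter> C"
  shows "\<exists>f\<in>box W B \<inter> C. \<forall>g\<in>box W B \<inter> C. F f \<le> F g"
proof -
  have "compact (box W B \<inter> C)" using compact_box assms(1) by (rule compact_Int_closed)
  then show ?thesis using continuous_attains_inf[of "box W B \<inter> C" F] assms
    by (metis continuous_on_subset empty_iff subset_UNIV)
qed

definition En :: "nat set \<Rightarrow> (nat \<Rightarrow> nat \<Rightarrow> real) \<Rightarrow> (nat \<Rightarrow> real) \<Rightarrow> real" where
  "En V A f = (\<Sum>u\<in>V. f u * Lmul V A f u)"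

lemma En_cont: "continuous_on UNIV (En V A)"
  unfolding En_def Lmul_def
  by (intro continuous_intros continuous_on_product_coordinates)

lemma En_expand:
  fixes f g :: "nat \<Rightarrow> real"
  assumes "finite V" "\<And>u v. A u v = A v u"
  shows "En V A (\<lambda>v. f v + e * g v) = En V A f + 2 * e * (\<Sum>u\<in>V. g u * Lmul V A f u) + e^2 * En V A g"
proof -
  have L: "Lmul V A (\<lambda>v. f v + e * g v) u = Lmul V A f u + e * Lmul V A g u" for u
    using Lmul_lin[of V A 1 f e g u] by simp
  have s: "(\<Sum>u\<in>V. f u * Lmul V A g u) = (\<Sum>u\<in>V. g u * Lmul V A f u)"
    by (rule sum_Lmul_sym[OF assms])
  have "En V A (\<lambda>v. f v + e * g v) = (\<Sum>u\<in>V. f u * Lmul V A f u + e * (f u * Lmul V A g u)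
        + e * (g u * Lmul V A f u) + e^2 * (g u * Lmul V A g u))"
    unfolding En_def L by (intro sum.cong refl) (simp add: algebra_simps power2_eq_square)
  also have "\<dots> = En V A f + e * (\<Sum>u\<in>V. f u * Lmul V A g u)
        + e * (\<Sum>u\<in>V. g u * Lmul V A f u) + e^2 * En V A g"
    by (simp add: sum.distrib sum_distrib_left En_def)
  finally have "En V A (\<lambda>v. f v + e * g v) = En V A f + e * (\<Sum>u\<in>V. f u * Lmul V A g u)
        + e * (\<Sum>u\<in>V. g u * Lmul V A f u) + e^2 * En V A g" .
  then show ?thesis using s by simp
qed

lemma En_scale:
  shows "En V A (\<lambda>v. e * g v) = e^2 * En V A g"
  unfolding En_def using Lmul_lin[of V A e g 0 g]
  by (simp add: sum_distrib_left power2_eq_square algebra_simps)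

lemma sq_le_sum:
  fixes g :: "nat \<Rightarrow> real"
  assumes "finite V" "i \<in> V"
  shows "(g i)^2 \<le> (\<Sum>u\<in>V. (g u)^2)"
  using assms by (intro member_le_sum) auto

lemma sum_ind1: "finite V \<Longrightarrow> w \<in> V \<Longrightarrow> (\<Sum>u\<in>V. (if u = w then 1 else 0) * X u) = (X w::real)"
proof -
  assume "finite V" "w \<in> V"
  have "(\<Sum>u\<in>V. (if u = w then 1 else 0) * X u) = (\<Sum>u\<in>V. if u = w then X u else 0)"
    by (intro sum.cong) auto
  then show ?thesis using \<open>finite V\<close> \<open>w \<in> V\<close> by simp
qed

lemma sum_ind2: "finite V \<Longrightarrow> w \<in> V \<Longrightarrow> (\<Sum>u\<in>V. X u * (if u = w then 1 else 0)) = (X w::real)"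
  using sum_ind1[of V w X] by (simp add: mult.commute)

lemma lap_solve:
  assumes V: "finite V" and t: "t \<in> V" and sym: "\<And>u v. A u v = A v u" and nn: "\<And>u v. A u v \<ge> 0"
    and conn: "\<And>\<phi>::nat\<Rightarrow>real. (\<forall>u\<in>V. \<forall>v\<in>V. A u v \<noteq> 0 \<longrightarrow> \<phi> u = \<phi> v) \<Longrightarrow> \<forall>u\<in>V. \<phi> u = \<phi> t"
    and csum: "(\<Sum>u\<in>V. c u) = 0"
  shows "\<exists>\<phi>. \<phi> t = 0 \<and> (\<forall>u. u \<notin> V \<longrightarrow> \<phi> u = 0) \<and> (\<forall>u\<in>V. Lmul V A \<phi> u = c u)"
proof -
  define W where "W = V - {t}"
  have WV: "W \<subseteq> V" unfolding W_def by auto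
  have Enn: "En V A f \<ge> 0" for f unfolding En_def using energy_nonneg[OF V sym nn] .
  have "\<exists>\<mu>>0. \<forall>g. (\<forall>i. i \<notin> W \<longrightarrow> g i = 0) \<longrightarrow> En V A g \<ge> \<mu> * (\<Sum>u\<in>V. (g u)^2)"
  proof (cases "W = {}")
    case True
    then have "(\<forall>i. i \<notin> W \<longrightarrow> g i = 0) \<longrightarrow> (\<Sum>u\<in>V. (g u)^2) = 0" for g :: "nat \<Rightarrow> real" by simp
    then show ?thesis using Enn by (intro exI[of _ 1]) auto
  next
    case False
    then obtain w where w: "w \<in> W" by auto
    define C1 where "C1 = {f::nat\<Rightarrow>real. (\<Sum>u\<in>V. (f u)^2) = 1}"
    have cC1: "closed C1" unfolding C1_def
      by (intro closed_Collect_eq continuous_intros continuous_on_product_coordinates)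
    have f0: "(\<lambda>i. if i = w then 1 else 0) \<in> box W 1 \<inter> C1"
    proof -
      have "(\<Sum>u\<in>V. ((\<lambda>i. if i = w then 1 else 0::real) u)^2) = (\<Sum>u\<in>V. if u = w then 1 else 0)"
        by (intro sum.cong) auto
      also have "\<dots> = 1" using w WV V by auto
      finally show ?thesis using w WV V unfolding box_def C1_def by auto
    qed
    obtain f where f: "f \<in> box W 1 \<inter> C1" and fmin: "\<And>g. g \<in> box W 1 \<inter> C1 \<Longrightarrow> En V A f \<le> En V A g"
      using box_min[OF cC1 En_cont f0] by blast
    have "En V A f \<noteq> 0"
    proof
      assume z: "En V A f = 0"
      have "\<forall>u\<in>V. \<forall>v\<in>V. A u v \<noteq> 0 \<longrightarrow> f u = f v"
        using energy_zero[where V=V and A=A and f=f, OF V sym nn] z unfolding En_def by blast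
      from conn[OF this] have "\<forall>u\<in>V. f u = f t" .
      moreover have "f t = 0" using f unfolding box_def W_def by auto
      ultimately have "(\<Sum>u\<in>V. (f u)^2) = 0" by simp
      then show False using f unfolding C1_def by simp
    qed
    then have mu: "En V A f > 0" using Enn[of f] by simp
    show ?thesis
    proof (intro exI[of _ "En V A f"] conjI mu allI impI)
      fix g :: "nat \<Rightarrow> real" assume gW: "\<forall>i. i \<notin> W \<longrightarrow> g i = 0"
      define s2 where "s2 = (\<Sum>u\<in>V. (g u)^2)"
      show "En V A g \<ge> En V A f * (\<Sum>u\<in>V. (g u)^2)"
      proof (cases "s2 = 0")
        case True then show ?thesis using Enn[of g] by (simp add: s2_def)
      next
        case False
        have s2p: "s2 > 0" using False unfolding s2_def by (metis less_eq_real_def sum_nonneg zero_le_power2)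
        define h where "h = (\<lambda>v. (1 / sqrt s2) * g v)"
        have "h \<in> box W 1 \<inter> C1"
        proof -
          have "\<bar>h i\<bar> \<le> 1" for i
          proof (cases "i \<in> V")
            case True
            have "(g i)^2 \<le> s2" unfolding s2_def using sq_le_sum[OF V True] .
            then have "\<bar>g i\<bar> \<le> sqrt s2" using real_le_rsqrt by (simp add: real_sqrt_abs[symmetric] del: real_sqrt_abs) 
            then show ?thesis unfolding h_def using s2p by (simp add: abs_mult divide_le_eq_1)
          next
            case False then show ?thesis using gW WV unfolding h_def by auto
          qed
          moreover have "(\<Sum>u\<in>V. (h u)^2) = 1"
            unfolding h_def using s2p by (simp add: power_mult_distrib power_divide sum_divide_distrib[symmetric] s2_def[symmetric])
          ultimately show ?thesis using gW unfolding box_def C1_def h_def by auto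
        qed
        then have "En V A f \<le> En V A h" by (rule fmin)
        also have "En V A h = (1 / sqrt s2)^2 * En V A g" unfolding h_def by (rule En_scale)
        also have "\<dots> = En V A g / s2" using s2p by (simp add: power_divide)
        finally show ?thesis using s2p by (simp add: s2_def[symmetric] field_simps)
      qed
    qed
  qed
  then obtain \<mu> where mu: "\<mu> > 0" and coer: "\<And>g. (\<forall>i. i \<notin> W \<longrightarrow> g i = 0) \<Longrightarrow> En V A g \<ge> \<mu> * (\<Sum>u\<in>V. (g u)^2)"
    by blast
  \<comment> \<open>Step 2: minimise the Dirichlet functional\<close>
  define J where "J = (\<lambda>f. En V A f - 2 * (\<Sum>u\<in>V. c u * f u))"
  define K where "K = (\<Sum>u\<in>V. (c u)^2)"
  have Jlow: "J g \<ge> (\<mu>/2) * (\<Sum>u\<in>V. (g u)^2) - (2/\<mu>) * K" if gW: "\<forall>i. i \<notin> W \<longrightarrow> g i = 0" for g :: "nat \<Rightarrow> real"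
  proof -
    have pt: "2 * (c u * g u) \<le> (\<mu>/2) * (g u)^2 + (2/\<mu>) * (c u)^2" for u
    proof -
      have "(\<mu>/2) * (g u)^2 + (2/\<mu>) * (c u)^2 - 2 * (c u * g u) = (\<mu> * g u - 2 * c u)^2 / (2 * \<mu>)"
        using mu by (simp add: field_simps power2_eq_square)
      moreover have "(\<mu> * g u - 2 * c u)^2 / (2 * \<mu>) \<ge> 0" using mu by simp
      ultimately show ?thesis by linarith
    qed
    have "2 * (\<Sum>u\<in>V. c u * g u) \<le> (\<mu>/2) * (\<Sum>u\<in>V. (g u)^2) + (2/\<mu>) * K"
      unfolding K_def sum_distrib_left sum.distrib[symmetric] by (intro sum_mono pt)
    then show ?thesis using coer[OF gW] unfolding J_def by simp
  qed
  define B where "B = sqrt (4 * K / \<mu>^2 + 1)"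
  have K0: "K \<ge> 0" unfolding K_def by (intro sum_nonneg) auto
  have B2: "B^2 = 4 * K / \<mu>^2 + 1" unfolding B_def using K0 mu by simp
  have B0: "B \<ge> 0" unfolding B_def using K0 by (intro real_sqrt_ge_zero add_nonneg_nonneg divide_nonneg_nonneg) auto
  have Jc: "continuous_on UNIV J" unfolding J_def En_def Lmul_def
    by (intro continuous_intros continuous_on_product_coordinates)
  have z: "(\<lambda>_. 0) \<in> box W B \<inter> UNIV" using B0 unfolding box_def by auto
  obtain f where f: "f \<in> box W B \<inter> UNIV" and fmin: "\<And>g. g \<in> box W B \<inter> UNIV \<Longrightarrow> J f \<le> J g"
    using box_min[OF closed_UNIV Jc z] by blast
  have fW: "\<forall>i. i \<notin> W \<longrightarrow> f i = 0" using f unfolding box_def by auto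
  have J0: "J (\<lambda>_. 0) = 0" unfolding J_def En_def by simp
  have gmin: "J f \<le> J g" if gW: "\<forall>i. i \<notin> W \<longrightarrow> g i = 0" for g :: "nat \<Rightarrow> real"
  proof (cases "g \<in> box W B")
    case True then show ?thesis using fmin by auto
  next
    case False
    then obtain i where i: "\<bar>g i\<bar> > B" using gW unfolding box_def by (auto simp: not_le)
    then have iW: "i \<in> W" using gW B0 by (cases "i \<in> W") auto
    have "B^2 < (g i)^2" using i B0 by (metis abs_le_square_iff abs_of_nonneg linorder_not_le)
    also have "\<dots> \<le> (\<Sum>u\<in>V. (g u)^2)" using sq_le_sum[OF V] iW WV by auto
    finally have "4 * K / \<mu>^2 + 1 < (\<Sum>u\<in>V. (g u)^2)" using B2 by simp
    then have "(\<mu>/2) * (4 * K / \<mu>^2 + 1) \<le> (\<mu>/2) * (\<Sum>u\<in>V. (g u)^2)" using mu by simp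
    moreover have "(\<mu>/2) * (4 * K / \<mu>^2 + 1) = (2/\<mu>) * K + \<mu>/2" using mu by (simp add: field_simps power2_eq_square)
    ultimately have "J g \<ge> \<mu>/2" using Jlow[OF gW] by simp
    moreover have "J f \<le> 0" using fmin[OF z] J0 by simp
    ultimately show ?thesis using mu by simp
  qed
  have stat: "Lmul V A f w = c w" if w: "w \<in> W" for w
  proof -
    define g where "g = (\<lambda>i. if i = w then 1 else (0::real))"
    have gW: "\<forall>i. i \<notin> W \<longrightarrow> (f i + e * g i) = 0" for e using fW w unfolding g_def by auto
    have "0 \<le> En V A g * e^2 + 2 * (Lmul V A f w - c w) * e" for e
    proof -
      have "J f \<le> J (\<lambda>i. f i + e * g i)" using gmin[OF gW] by simp
      moreover have "(\<Sum>u\<in>V. g u * Lmul V A f u) = Lmul V A f w" "(\<Sum>u\<in>V. c u * g u) = c w"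
        using w WV V unfolding g_def by (auto simp: sum_ind1 sum_ind2)
      moreover have "(\<Sum>u\<in>V. c u * (f u + e * g u)) = (\<Sum>u\<in>V. c u * f u) + e * (\<Sum>u\<in>V. c u * g u)"
        by (simp add: algebra_simps sum.distrib sum_distrib_left)
      ultimately show ?thesis unfolding J_def En_expand[OF V sym] by (simp add: algebra_simps)
    qed
    from quad_lin_zero[OF this] show ?thesis by simp
  qed
  have ft: "f t = 0" using fW unfolding W_def by auto
  have "Lmul V A f t = c t"
  proof -
    have "(\<Sum>u\<in>V. Lmul V A f u) = 0" by (rule sum_Lmul_zero[OF V sym])
    moreover have "(\<Sum>u\<in>V. Lmul V A f u) = Lmul V A f t + (\<Sum>u\<in>W. Lmul V A f u)"
      unfolding W_def using V t by (simp add: sum.remove)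
    moreover have "(\<Sum>u\<in>V. c u) = c t + (\<Sum>u\<in>W. c u)"
      unfolding W_def using V t by (simp add: sum.remove)
    moreover have "(\<Sum>u\<in>W. Lmul V A f u) = (\<Sum>u\<in>W. c u)" using stat by simp
    ultimately show ?thesis using csum by simp
  qed
  then have "\<forall>u\<in>V. Lmul V A f u = c u" using stat unfolding W_def by auto
  moreover have "\<forall>u. u \<notin> V \<longrightarrow> f u = 0" using fW WV by auto
  ultimately show ?thesis using ft by blast
qed



lemma matvec:
  assumes "finite V"
  shows "(\<Sum>u\<in>V. Q z u * (\<Sum>y\<in>V. R u y * f y)) = (\<Sum>y\<in>V. matmul V Q R z y * f y)"
proof -
  have "(\<Sum>u\<in>V. Q z u * (\<Sum>y\<in>V. R u y * f y)) = (\<Sum>u\<in>V. \<Sum>y\<in>V. Q z u * R u y * f y)"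
    by (simp add: sum_distrib_left mult.assoc)
  also have "\<dots> = (\<Sum>y\<in>V. \<Sum>u\<in>V. Q z u * R u y * f y)" by (rule sum.swap)
  also have "\<dots> = (\<Sum>y\<in>V. matmul V Q R z y * f y)"
    by (simp add: matmul_def sum_distrib_right)
  finally show ?thesis .
qed

lemma sum_ind3: "finite V \<Longrightarrow> w \<in> V \<Longrightarrow> (\<Sum>u\<in>V. (if w = u then 1 else 0) * X u) = (X w::real)"
proof -
  assume "finite V" "w \<in> V"
  have "(\<Sum>u\<in>V. (if w = u then 1 else 0) * X u) = (\<Sum>u\<in>V. if u = w then X u else 0)"
    by (intro sum.cong) auto
  then show ?thesis using \<open>finite V\<close> \<open>w \<in> V\<close> by simp
qed

lemma lap_pinv_exists:
  assumes V: "finite V" and t: "t \<in> V" and sym: "\<And>u v. A u v = A v u" and nn: "\<And>u v. A u v \<ge> 0"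
    and conn: "\<And>\<phi>::nat\<Rightarrow>real. (\<forall>u\<in>V. \<forall>v\<in>V. A u v \<noteq> 0 \<longrightarrow> \<phi> u = \<phi> v) \<Longrightarrow> \<forall>u\<in>V. \<phi> u = \<phi> t"
  shows "is_pinv V (lap V A) (pinv V (lap V A))"
proof -
  let ?L = "lap V A"
  define n where "n = real (card V)"
  have n0: "n > 0" unfolding n_def using V t by (simp add: card_gt_0_iff) blast
  define c where "c = (\<lambda>(w::nat) (u::nat). (if u = w then 1 else 0) - 1 / n)"
  have csum: "(\<Sum>u\<in>V. c w u) = 0" if "w \<in> V" for w
    using that V n0 unfolding c_def n_def by (cases "V = {}") (auto simp: sum_subtractf)
  define \<Phi> where "\<Phi> = (\<lambda>w. SOME \<phi>. (\<forall>u\<in>V. Lmul V A \<phi> u = c w u))"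
  have Phi: "\<forall>u\<in>V. Lmul V A (\<Phi> w) u = c w u" if "w \<in> V" for w
  proof -
    from lap_solve[where V=V and A=A and t=t and c="c w", OF V t sym nn conn csum[OF that]]
    have "\<exists>\<phi>. \<forall>u\<in>V. Lmul V A \<phi> u = c w u" by blast
    then show ?thesis unfolding \<Phi>_def by (rule someI_ex)
  qed
  define \<psi> where "\<psi> = (\<lambda>w u. \<Phi> w u - (\<Sum>v\<in>V. \<Phi> w v) / n)"
  have psi_L: "Lmul V A (\<psi> w) u = c w u" if "w \<in> V" "u \<in> V" for w u
    using Phi[OF that(1)] that(2) Lmul_add_const[OF V, of A "\<Phi> w" "- (\<Sum>v\<in>V. \<Phi> w v) / n" u]
    unfolding \<psi>_def by simp
  have psi_sum: "(\<Sum>u\<in>V. \<psi> w u) = 0" for w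
    unfolding \<psi>_def n_def using n0 V by (simp add: sum_subtractf n_def)
  have cpsi: "(\<Sum>v\<in>V. c u v * \<psi> w v) = \<psi> w u" if "u \<in> V" for u w
  proof -
    have "(\<Sum>v\<in>V. c u v * \<psi> w v) = (\<Sum>v\<in>V. (if v = u then 1 else 0) * \<psi> w v) - (\<Sum>v\<in>V. \<psi> w v) / n"
      unfolding c_def by (simp add: algebra_simps sum_subtractf sum_divide_distrib)
    then show ?thesis using psi_sum sum_ind1[OF V that] by simp
  qed
  have psi_sym: "\<psi> w u = \<psi> u w" if "u \<in> V" "w \<in> V" for u w
  proof -
    have "\<psi> w u = (\<Sum>v\<in>V. c u v * \<psi> w v)" using cpsi[OF that(1)] by simp
    also have "\<dots> = (\<Sum>v\<in>V. \<psi> w v * Lmul V A (\<psi> u) v)"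
      using psi_L[OF that(1)] by (intro sum.cong) (auto simp: c_def)
    also have "\<dots> = (\<Sum>v\<in>V. \<psi> u v * Lmul V A (\<psi> w) v)" by (rule sum_Lmul_sym[where A=A, OF V sym])
    also have "\<dots> = (\<Sum>v\<in>V. c w v * \<psi> u v)"
      using psi_L[OF that(2)] by (intro sum.cong) (auto simp: c_def)
    also have "\<dots> = \<psi> u w" using cpsi[OF that(2)] by simp
    finally show ?thesis .
  qed
  define M where "M = (\<lambda>u w. if u \<in> V \<and> w \<in> V then \<psi> w u else 0)"
  define P where "P = (\<lambda>u w. if u \<in> V \<and> w \<in> V then c w u else 0)"
  have Psym: "P u w = P w u" for u w unfolding P_def c_def by auto
  have Msym: "M u w = M w u" for u w unfolding M_def using psi_sym by auto
  have Lsym: "?L u w = ?L w u" for u w by (rule lap_sym[where A=A, OF sym])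
  have LM: "matmul V ?L M = P"
  proof (intro ext)
    fix u w
    show "matmul V ?L M u w = P u w"
    proof (cases "u \<in> V \<and> w \<in> V")
      case True
      then have "matmul V ?L M u w = Lmul V A (\<psi> w) u"
        unfolding matmul_def Lmul_def M_def by (intro sum.cong) auto
      then show ?thesis using psi_L True unfolding P_def by simp
    next
      case False
      then show ?thesis unfolding matmul_def M_def P_def lap_def by auto
    qed
  qed
  have MLeq: "matmul V M ?L = P"
  proof (intro ext)
    fix u w
    have "matmul V M ?L u w = matmul V ?L M w u"
      unfolding matmul_def by (intro sum.cong) (auto simp: Msym Lsym mult.commute)
    then show "matmul V M ?L u w = P u w" using LM Psym by simp
  qed
  have colsum: "(\<Sum>v\<in>V. ?L v w) = 0" for w
  proof (cases "w \<in> V")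
    case True
    have "(\<Sum>v\<in>V. ?L v w) = Lmul V A (\<lambda>_. 1) w" unfolding Lmul_def by (simp add: Lsym)
    then show ?thesis using Lmul_const[OF V] by simp
  next
    case False then show ?thesis unfolding lap_def by simp
  qed
  have PL: "matmul V P ?L = ?L"
  proof (intro ext)
    fix u w
    show "matmul V P ?L u w = ?L u w"
    proof (cases "u \<in> V")
      case True
      have "matmul V P ?L u w = (\<Sum>v\<in>V. (if u = v then 1 else 0) * ?L v w) - (\<Sum>v\<in>V. ?L v w) / n"
        unfolding matmul_def P_def c_def using True
        by (simp add: algebra_simps sum_subtractf sum_divide_distrib)
      also have "\<dots> = ?L u w" using colsum sum_ind3[OF V True] by simp
      finally show ?thesis .
    next
      case False then show ?thesis unfolding matmul_def P_def lap_def by simp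
    qed
  qed
  have PM: "matmul V P M = M"
  proof (intro ext)
    fix u w
    show "matmul V P M u w = M u w"
    proof (cases "u \<in> V \<and> w \<in> V")
      case True
      have "matmul V P M u w = (\<Sum>v\<in>V. c u v * \<psi> w v)"
        unfolding matmul_def P_def M_def c_def using True by (intro sum.cong) auto
      then show ?thesis using cpsi True unfolding M_def by simp
    next
      case False then show ?thesis unfolding matmul_def P_def M_def by auto
    qed
  qed
  have tP: "transp_mat P = P" unfolding transp_mat_def using Psym by (intro ext) simp
  have "is_pinv V ?L M"
    unfolding is_pinv_def using LM MLeq PL PM tP by (auto simp: M_def)
  then show ?thesis using pinv_is_pinv[OF V] by simp
qed

lemma eff_res_eq:
  assumes V: "finite V" and s: "s \<in> V" and t: "t \<in> V" and st: "s \<noteq> t" and sym: "\<And>u v. A u v = A v u"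
    and pi: "is_pinv V (lap V A) (pinv V (lap V A))"
    and sol: "\<forall>u\<in>V. Lmul V A \<phi> u = (if u = s then 1 else 0) - (if u = t then 1 else 0)"
  shows "eff_res V A s t = \<phi> s - \<phi> t"
proof -
  let ?L = "lap V A" and ?M = "pinv V (lap V A)"
  define b where "b = (\<lambda>u. (if u = s then 1 else 0) - (if u = t then 1 else 0) :: real)"
  have Lsym: "?L u w = ?L w u" for u w by (rule lap_sym[where A=A, OF sym])
  have bR: "b v = (\<Sum>y\<in>V. ?L v y * \<phi> y)" if "v \<in> V" for v
    using sol that unfolding b_def Lmul_def by simp
  have bL: "b u = (\<Sum>z\<in>V. \<phi> z * ?L z u)" if "u \<in> V" for u
  proof -
    have "(\<Sum>y\<in>V. ?L u y * \<phi> y) = (\<Sum>z\<in>V. \<phi> z * ?L z u)"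
      by (intro sum.cong refl) (simp add: Lsym[of u] mult.commute)
    then show ?thesis using bR[OF that] by simp
  qed
  have LML: "matmul V (matmul V ?L ?M) ?L = ?L" using pi unfolding is_pinv_def by simp
  define G where "G = (\<lambda>u. \<Sum>y\<in>V. matmul V ?M ?L u y * \<phi> y)"
  have "eff_res V A s t = (\<Sum>u\<in>V. \<Sum>v\<in>V. b u * ?M u v * b v)"
    unfolding eff_res_def b_def Let_def by simp
  also have "\<dots> = (\<Sum>u\<in>V. b u * (\<Sum>v\<in>V. ?M u v * b v))"
    by (simp add: sum_distrib_left mult.assoc)
  also have "\<dots> = (\<Sum>u\<in>V. b u * G u)"
  proof (intro sum.cong refl)
    fix u assume "u \<in> V"
    have "(\<Sum>v\<in>V. ?M u v * b v) = (\<Sum>v\<in>V. ?M u v * (\<Sum>y\<in>V. ?L v y * \<phi> y))"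
      using bR by simp
    also have "\<dots> = G u" unfolding G_def by (rule matvec[OF V])
    finally show "b u * (\<Sum>v\<in>V. ?M u v * b v) = b u * G u" by simp
  qed
  also have "\<dots> = (\<Sum>u\<in>V. (\<Sum>z\<in>V. \<phi> z * ?L z u) * G u)"
    using bL by simp
  also have "\<dots> = (\<Sum>z\<in>V. \<phi> z * (\<Sum>u\<in>V. ?L z u * G u))"
  proof -
    have "(\<Sum>u\<in>V. (\<Sum>z\<in>V. \<phi> z * ?L z u) * G u) = (\<Sum>u\<in>V. \<Sum>z\<in>V. \<phi> z * ?L z u * G u)"
      by (simp add: sum_distrib_right)
    also have "\<dots> = (\<Sum>z\<in>V. \<Sum>u\<in>V. \<phi> z * ?L z u * G u)" by (rule sum.swap)
    also have "\<dots> = (\<Sum>z\<in>V. \<phi> z * (\<Sum>u\<in>V. ?L z u * G u))"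
      by (simp add: sum_distrib_left mult.assoc)
    finally show ?thesis .
  qed
  also have "\<dots> = (\<Sum>z\<in>V. \<phi> z * (\<Sum>y\<in>V. matmul V ?L (matmul V ?M ?L) z y * \<phi> y))"
    unfolding G_def by (simp add: matvec[OF V])
  also have "\<dots> = (\<Sum>z\<in>V. \<phi> z * b z)"
    using LML bR by (simp add: matmul_assoc[OF V])
  also have "\<dots> = \<phi> s - \<phi> t"
    using V s t st unfolding b_def by (simp add: right_diff_distrib sum_subtractf sum_ind2)
  finally show ?thesis .
qed



lemma Lmul_cong: "(\<And>u. u \<in> V \<Longrightarrow> f u = g u) \<Longrightarrow> Lmul V A f w = Lmul V A g w"
  unfolding Lmul_def by simp

lemma En_cong: "(\<And>u. u \<in> V \<Longrightarrow> f u = g u) \<Longrightarrow> En V A f = En V A g"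
  unfolding En_def using Lmul_cong[of V f g] by (intro sum.cong) auto

lemma normalize_box:
  fixes g :: "nat \<Rightarrow> real"
  assumes V: "finite V" and gW: "\<forall>i. i \<notin> V \<longrightarrow> g i = 0" and s2p: "(\<Sum>u\<in>V. (g u)^2) > 0"
  defines "h \<equiv> (\<lambda>v. (1 / sqrt (\<Sum>u\<in>V. (g u)^2)) * g v)"
  shows "h \<in> box V 1" "(\<Sum>u\<in>V. (h u)^2) = 1" "(\<Sum>u\<in>V. h u) = (\<Sum>u\<in>V. g u) / sqrt (\<Sum>u\<in>V. (g u)^2)"
    "En V A h = En V A g / (\<Sum>u\<in>V. (g u)^2)"
proof -
  define s2 where "s2 = (\<Sum>u\<in>V. (g u)^2)"
  have s2p': "s2 > 0" using s2p unfolding s2_def .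
  have h': "h = (\<lambda>v. (1 / sqrt s2) * g v)" unfolding h_def s2_def ..
  have "\<bar>h i\<bar> \<le> 1" for i
  proof (cases "i \<in> V")
    case True
    have "(g i)^2 \<le> s2" unfolding s2_def using sq_le_sum[OF V True] .
    then have "\<bar>g i\<bar> \<le> sqrt s2" using real_le_rsqrt by (simp add: real_sqrt_abs[symmetric] del: real_sqrt_abs)
    then show ?thesis unfolding h' using s2p' by (simp add: abs_mult divide_le_eq_1)
  next
    case False then show ?thesis using gW unfolding h' by auto
  qed
  then show "h \<in> box V 1" using gW unfolding box_def h' by auto
  show "(\<Sum>u\<in>V. (h u)^2) = 1"
    unfolding h' using s2p' by (simp add: power_mult_distrib power_divide sum_divide_distrib[symmetric] s2_def[symmetric])
  show "(\<Sum>u\<in>V. h u) = (\<Sum>u\<in>V. g u) / sqrt (\<Sum>u\<in>V. (g u)^2)"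
    unfolding h' s2_def[symmetric] by (simp add: sum_divide_distrib)
  have "En V A h = (1 / sqrt s2)^2 * En V A g" unfolding h' by (rule En_scale)
  also have "\<dots> = En V A g / s2" using s2p' by (simp add: power_divide)
  finally show "En V A h = En V A g / (\<Sum>u\<in>V. (g u)^2)" unfolding s2_def .
qed

lemma edge_adj_sym: "(\<And>u v. E u v = E v u) \<Longrightarrow> edge_adj E u v = edge_adj E v u"
  unfolding edge_adj_def by auto

lemma deg_edge_adj: "finite S \<Longrightarrow> deg S (edge_adj E) u = real (card {v\<in>S. E u v})"
proof -
  assume S: "finite S"
  have "deg S (edge_adj E) u = (\<Sum>v\<in>S. if E u v then 1 else 0)" unfolding deg_def edge_adj_def ..
  also have "\<dots> = real (card (S \<inter> {v. E u v}))" using S by (simp add: sum.If_cases)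
  also have "S \<inter> {v. E u v} = {v\<in>S. E u v}" by auto
  finally show ?thesis .
qed

lemma quad_aux:
  fixes lam e Y G Z X En :: real
  assumes "lam * (1 + 2 * e * Y + e^2 * G) \<le> lam + 2 * e * Z + e^2 * En" "Z = X + lam * Y"
  shows "0 \<le> (En - lam * G) * e^2 + 2 * X * e"
  using assms by (simp add: algebra_simps)

lemma poincare:
  fixes S :: "nat set" and E :: "nat \<Rightarrow> nat \<Rightarrow> bool" and d :: nat and gam :: real
  assumes S: "finite S" and S2: "card S \<ge> 2" and Esym: "\<And>u v. E u v = E v u"
    and d1: "d \<ge> 1" and reg: "\<forall>u\<in>S. card {v\<in>S. E u v} = d"
    and eig: "second_eig_ge S (norm_lap S (edge_adj E)) gam" and gam: "gam > 0"
  shows "En S (edge_adj E) p \<ge> gam * d * (\<Sum>u\<in>S. (p u - (\<Sum>v\<in>S. p v) / card S)^2)"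
proof -
  let ?A = "edge_adj E"
  have sym: "\<And>u v. ?A u v = ?A v u" using edge_adj_sym[of E] Esym by blast
  have nn: "\<And>u v. ?A u v \<ge> 0" unfolding edge_adj_def by auto
  have degd: "deg S ?A u = d" if "u \<in> S" for u using deg_edge_adj[OF S] reg that by simp
  define n where "n = real (card S)"
  have n2: "n \<ge> 2" unfolding n_def using S2 by simp
  obtain a b where ab: "a \<in> S" "b \<in> S" "a \<noteq> b"
  proof -
    from S2 have "\<not> card S \<le> 1" by simp
    then have "\<not> (\<forall>x\<in>S. \<forall>y\<in>S. x = y)" using card_le_Suc0_iff_eq[OF S] by simp
    then show ?thesis using that by blast
  qed
  define C0 where "C0 = {f::nat\<Rightarrow>real. (\<Sum>u\<in>S. f u) = 0 \<and> (\<Sum>u\<in>S. (f u)^2) = 1}"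
  have cC0: "closed C0" unfolding C0_def
    by (intro closed_Collect_conj closed_Collect_eq continuous_intros continuous_on_product_coordinates)
  define g0 where "g0 = (\<lambda>i. (if i = a then 1 else 0) - (if i = b then 1 else (0::real)))"
  have g0W: "\<forall>i. i \<notin> S \<longrightarrow> g0 i = 0" unfolding g0_def using ab by auto
  have g0s: "(\<Sum>u\<in>S. g0 u) = 0" unfolding g0_def using ab S by (simp add: sum_subtractf)
  have "(\<Sum>u\<in>S. (g0 u)^2) = (\<Sum>u\<in>S. (if u = a then 1 else 0) + (if u = b then 1 else (0::real)))"
    unfolding g0_def using ab by (intro sum.cong) auto
  also have "\<dots> = 2" using ab S by (simp add: sum.distrib)
  finally have g02: "(\<Sum>u\<in>S. (g0 u)^2) = 2" .
  have f0: "(\<lambda>v. (1 / sqrt (\<Sum>u\<in>S. (g0 u)^2)) * g0 v) \<in> box S 1 \<inter> C0"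
    using normalize_box[OF S g0W] g02 g0s unfolding C0_def by auto
  obtain f where f: "f \<in> box S 1 \<inter> C0" and fmin: "\<And>g. g \<in> box S 1 \<inter> C0 \<Longrightarrow> En S ?A f \<le> En S ?A g"
    using box_min[OF cC0 En_cont f0] by blast
  define lam where "lam = En S ?A f"
  have fW: "\<forall>i. i \<notin> S \<longrightarrow> f i = 0" and fs: "(\<Sum>u\<in>S. f u) = 0" and f2: "(\<Sum>u\<in>S. (f u)^2) = 1"
    using f unfolding box_def C0_def by auto
  have Enn: "En S ?A g \<ge> 0" for g unfolding En_def using energy_nonneg[where V=S and A="edge_adj E", OF S sym nn] .
  have ray: "En S ?A g \<ge> lam * (\<Sum>u\<in>S. (g u)^2)"
    if gW: "\<forall>i. i \<notin> S \<longrightarrow> g i = 0" and gs: "(\<Sum>u\<in>S. g u) = 0" for g :: "nat \<Rightarrow> real"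
  proof (cases "(\<Sum>u\<in>S. (g u)^2) = 0")
    case True then show ?thesis using Enn[of g] by simp
  next
    case False
    then have s2p: "(\<Sum>u\<in>S. (g u)^2) > 0" by (metis less_eq_real_def sum_nonneg zero_le_power2)
    note nb = normalize_box[OF S gW s2p]
    have "lam \<le> En S ?A (\<lambda>v. (1 / sqrt (\<Sum>u\<in>S. (g u)^2)) * g v)"
      unfolding lam_def using nb gs by (intro fmin) (auto simp: C0_def)
    also have "\<dots> = En S ?A g / (\<Sum>u\<in>S. (g u)^2)" by (rule nb(4))
    finally show ?thesis using s2p by (simp add: le_divide_eq)
  qed
  define r where "r = (\<lambda>u. Lmul S ?A f u - lam * f u)"
  have orth: "(\<Sum>u\<in>S. g u * r u) = 0"
    if gW: "\<forall>i. i \<notin> S \<longrightarrow> g i = 0" and gs: "(\<Sum>u\<in>S. g u) = 0" for g :: "nat \<Rightarrow> real"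
  proof -
    have "0 \<le> (En S ?A g - lam * (\<Sum>u\<in>S. (g u)^2)) * e^2 + 2 * (\<Sum>u\<in>S. g u * r u) * e" for e
    proof -
      have hW: "\<forall>i. i \<notin> S \<longrightarrow> f i + e * g i = 0" using fW gW by simp
      have hs: "(\<Sum>u\<in>S. f u + e * g u) = 0" using fs gs by (simp add: sum.distrib sum_distrib_left[symmetric])
      have H0: "En S ?A (\<lambda>v. f v + e * g v) \<ge> lam * (\<Sum>u\<in>S. (f u + e * g u)^2)"
        using ray[OF hW hs] .
      have H1: "(\<Sum>u\<in>S. (f u + e * g u)^2) = 1 + 2 * e * (\<Sum>u\<in>S. g u * f u) + e^2 * (\<Sum>u\<in>S. (g u)^2)"
        using f2 by (simp add: power2_sum sum.distrib sum_distrib_left power_mult_distrib algebra_simps)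
      have H2: "(\<Sum>u\<in>S. g u * Lmul S ?A f u) = (\<Sum>u\<in>S. g u * r u) + lam * (\<Sum>u\<in>S. g u * f u)"
        unfolding r_def by (simp add: algebra_simps sum_subtractf sum_distrib_left)
      have H3: "En S ?A (\<lambda>v. f v + e * g v) = lam + 2 * e * (\<Sum>u\<in>S. g u * Lmul S ?A f u) + e^2 * En S ?A g"
        unfolding En_expand[where V=S and A="edge_adj E", OF S sym] lam_def ..
      show ?thesis by (rule quad_aux[OF H0[unfolded H1 H3] H2])
    qed
    from quad_lin_zero[OF this] show ?thesis by simp
  qed
  have rs: "(\<Sum>u\<in>S. r u) = 0"
    unfolding r_def using sum_Lmul_zero[where V=S and A="edge_adj E", OF S sym] fs
    by (simp add: sum_subtractf sum_distrib_left[symmetric])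
  define rr where "rr = (\<lambda>u. if u \<in> S then r u else 0)"
  have "(\<Sum>u\<in>S. rr u * r u) = 0"
    by (rule orth) (use rs in \<open>auto simp: rr_def\<close>)
  then have "(\<Sum>u\<in>S. (r u)^2) = 0" unfolding rr_def by (simp add: power2_eq_square)
  then have r0: "r u = 0" if "u \<in> S" for u
    using that S by (subst (asm) sum_nonneg_eq_0_iff) auto
  have dpos: "real d > 0" using d1 by simp
  have NL: "(\<Sum>v\<in>S. norm_lap S ?A u v * g v) = g u - (\<Sum>v\<in>S. ?A u v * g v) / d" if "u \<in> S" for u g
  proof -
    have "(\<Sum>v\<in>S. norm_lap S ?A u v * g v) = (\<Sum>v\<in>S. (if u = v then 1 else 0) * g v - (?A u v * g v) / d)"
      unfolding norm_lap_def using that degd dpos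
      by (intro sum.cong refl) (auto simp: real_sqrt_mult_self algebra_simps)
    also have "\<dots> = g u - (\<Sum>v\<in>S. ?A u v * g v) / d"
      using sum_ind3[OF S that, of g] by (simp add: sum_subtractf sum_divide_distrib)
    finally show ?thesis .
  qed
  have ev1: "is_eigvec S (norm_lap S ?A) 0 (\<lambda>_. 1)"
    unfolding is_eigvec_def
  proof (intro conjI ballI)
    show "\<exists>v\<in>S. (1::real) \<noteq> 0" using ab by auto
    fix u assume u: "u \<in> S"
    have "(\<Sum>v\<in>S. ?A u v * 1) = deg S ?A u" unfolding deg_def by simp
    then show "(\<Sum>v\<in>S. norm_lap S ?A u v * 1) = 0 * 1" using NL[OF u, of "\<lambda>_. 1"] degd[OF u] dpos by simp
  qed
  have ev2: "is_eigvec S (norm_lap S ?A) (lam / d) f"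
    unfolding is_eigvec_def
  proof (intro conjI ballI)
    show "\<exists>v\<in>S. f v \<noteq> 0"
    proof (rule ccontr)
      assume "\<not> (\<exists>v\<in>S. f v \<noteq> 0)" then have "(\<Sum>u\<in>S. (f u)^2) = 0" by simp
      then show False using f2 by simp
    qed
    fix u assume u: "u \<in> S"
    have "Lmul S ?A f u = d * f u - (\<Sum>v\<in>S. ?A u v * f v)" using Lmul_eq[OF u S] degd[OF u] by simp
    moreover have "Lmul S ?A f u = lam * f u" using r0[OF u] unfolding r_def by simp
    ultimately show "(\<Sum>v\<in>S. norm_lap S ?A u v * f v) = lam / d * f u"
      using NL[OF u, of f] dpos by (simp add: field_simps)
  qed
  have lamge: "lam \<ge> gam * d"
  proof (rule ccontr)
    assume "\<not> lam \<ge> gam * d"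
    then have "lam / d < gam" using dpos by (simp add: divide_less_eq mult.commute)
    then obtain c where c: "\<forall>u\<in>S. f u = c * 1"
      using eig ev1 ev2 gam unfolding second_eig_ge_def by blast
    then have "(\<Sum>u\<in>S. f u) = c * n" unfolding n_def by simp
    then have "c = 0" using fs n2 by simp
    then have "(\<Sum>u\<in>S. (f u)^2) = 0" using c by simp
    then show False using f2 by simp
  qed
  define m where "m = (\<Sum>v\<in>S. p v) / card S"
  have "(\<Sum>v\<in>S. p v) = m * n" unfolding m_def n_def using n2 by (simp add: n_def)
  define g where "g = (\<lambda>u. if u \<in> S then p u - m else 0)"
  have gW: "\<forall>i. i \<notin> S \<longrightarrow> g i = 0" unfolding g_def by simp
  have gs: "(\<Sum>u\<in>S. g u) = 0" unfolding g_def m_def using n2 S by (simp add: sum_subtractf n_def)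
  have "En S ?A p = En S ?A (\<lambda>v. p v + (- m) * 1)"
  proof -
    have "En S ?A (\<lambda>v. p v + (- m) * 1) = En S ?A p + 2 * (- m) * (\<Sum>u\<in>S. 1 * Lmul S ?A p u) + (- m)^2 * En S ?A (\<lambda>_. 1)"
      by (rule En_expand[where V=S and A="edge_adj E", OF S sym])
    moreover have "(\<Sum>u\<in>S. 1 * Lmul S ?A p u) = 0" using sum_Lmul_zero[where V=S and A="edge_adj E", OF S sym] by simp
    moreover have "En S ?A (\<lambda>_. 1) = 0" unfolding En_def using Lmul_const[OF S] by simp
    ultimately show ?thesis by simp
  qed
  also have "\<dots> = En S ?A g" unfolding g_def by (rule En_cong) simp
  finally have Efg: "En S ?A p = En S ?A g" .
  have "gam * d * (\<Sum>u\<in>S. (g u)^2) \<le> lam * (\<Sum>u\<in>S. (g u)^2)"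
    using lamge by (intro mult_right_mono sum_nonneg) auto
  also have "\<dots> \<le> En S ?A g" by (rule ray[OF gW gs])
  finally have "gam * d * (\<Sum>u\<in>S. (g u)^2) \<le> En S ?A p" using Efg by simp
  moreover have "(\<Sum>u\<in>S. (g u)^2) = (\<Sum>u\<in>S. (p u - m)^2)" unfolding g_def by simp
  ultimately show ?thesis unfolding m_def by simp
qed



lemma cs_sum:
  fixes f :: "nat \<Rightarrow> real"
  assumes N: "finite N"
  shows "(sum f N)^2 \<le> real (card N) * (\<Sum>u\<in>N. (f u)^2)"
proof (cases "N = {}")
  case True then show ?thesis by simp
next
  case False
  define k where "k = real (card N)"
  define P where "P = sum f N"
  have k0: "k > 0" unfolding k_def using N False by (simp add: card_gt_0_iff)
  have ex: "(\<Sum>u\<in>N. (f u - c)^2) = (\<Sum>u\<in>N. (f u)^2) - 2 * c * (\<Sum>u\<in>N. f u) + k * c^2" for c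
    unfolding k_def by (simp add: power2_diff sum.distrib sum_subtractf sum_distrib_left[symmetric] mult.assoc, simp add: sum_distrib_left mult.commute)
  have "(\<Sum>u\<in>N. (f u - P/k)^2) = (\<Sum>u\<in>N. (f u)^2) - 2 * (P/k) * (\<Sum>u\<in>N. f u) + k * (P/k)^2"
    by (rule ex)
  also have "\<dots> = (\<Sum>u\<in>N. (f u)^2) - P^2 / k"
    using k0 unfolding P_def[symmetric] by (simp add: field_simps power2_eq_square)
  finally have "0 \<le> (\<Sum>u\<in>N. (f u)^2) - P^2 / k" by (metis sum_nonneg zero_le_power2)
  then have "P^2 / k \<le> (\<Sum>u\<in>N. (f u)^2)" by simp
  then show ?thesis using k0 unfolding P_def k_def by (simp add: divide_le_eq mult.commute)
qed

lemma ln2_ge_half: "ln (2::real) \<ge> 1/2"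
proof -
  have "ln (1/2::real) \<le> 1/2 - 1" by (rule ln_le_minus_one) simp
  moreover have "ln (1/2::real) = - ln 2" by (simp add: ln_div)
  ultimately show ?thesis by simp
qed

lemma P_bound:
  fixes x n gd P m T W2 :: real
  assumes x: "x > 0" and n: "n > 0" and gd: "gd > 0" and PT: "P = x * m + T"
    and T: "T^2 \<le> x * W2" and W: "W2 \<ge> 0" and main: "P / x \<ge> gd * W2 + n * m^2"
  shows "0 \<le> P" "P \<le> 2 * x / n + 2 / gd"
proof -
  have "P / x \<ge> 0" using main W gd n by (smt (verit) mult_nonneg_nonneg zero_le_power2)
  then show P0: "0 \<le> P" using x by (simp add: zero_le_divide_iff)
  have "(x * m + T)^2 \<le> 2 * (x * m)^2 + 2 * T^2"
    using sum_squares_bound[of "x * m" T] by (simp add: power2_sum)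
  moreover have "(x * m)^2 \<le> x * P / n"
  proof -
    have "n * m^2 \<le> P / x" using main W gd by (smt (verit) mult_nonneg_nonneg)
    then have "x * (n * m^2) \<le> P" using x by (simp add: le_divide_eq mult.commute)
    then have "x * (x * (n * m^2)) \<le> x * P" using x by simp
    then show ?thesis using n by (simp add: le_divide_eq power_mult_distrib algebra_simps power2_eq_square)
  qed
  moreover have "T^2 \<le> P / gd"
  proof -
    have "gd * W2 \<le> P / x" using main n by (smt (verit) mult_nonneg_nonneg zero_le_power2)
    then have "x * (gd * W2) \<le> P" using x by (simp add: le_divide_eq mult.commute)
    then have "x * W2 \<le> P / gd" using gd by (simp add: le_divide_eq algebra_simps)
    then show ?thesis using T by simp
  qed
  ultimately have "P^2 \<le> 2 * (x * P / n) + 2 * (P / gd)" unfolding PT[symmetric]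
    by linarith
  also have "2 * (x * P / n) + 2 * (P / gd) = P * (2 * x / n + 2 / gd)"
    by (simp add: algebra_simps)
  finally have "P^2 \<le> P * (2 * x / n + 2 / gd)" .
  then show "P \<le> 2 * x / n + 2 / gd"
  proof (cases "P = 0")
    case True then show ?thesis using x n gd by simp
  next
    case False
    then have "P > 0" using P0 by simp
    then show ?thesis using \<open>P^2 \<le> P * (2 * x / n + 2 / gd)\<close> by (simp add: power2_eq_square)
  qed
qed

lemma final_arith:
  fixes x d ds n Ln gam Q :: real
  assumes x: "x \<ge> 1" and d: "d \<ge> 1" and dsx: "ds \<ge> x" and n: "n \<ge> 2 * d^3" and Ln: "Ln \<ge> 1/2"
    and dsL: "ds * Ln \<le> d" and gam: "gam > 0" and Q: "Q \<le> 2 / n + 2 / (gam * d * x)"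
  shows "Q \<le> (4 + 4 / gam) * Ln / (d * x)" "(4 + 4 / gam) * Ln / (d * x) \<le> (4 + 4 / gam) / (ds * x)"
proof -
  have dx: "d * x > 0" using x d by simp
  have d3: "d^3 > 0" using d by simp
  have n0: "n > 0" using n d3 by linarith
  have Lp: "Ln > 0" using Ln by simp
  have xL: "x * Ln \<le> d"
  proof -
    have "x * Ln \<le> ds * Ln" using dsx Ln by (intro mult_right_mono) auto
    then show ?thesis using dsL by simp
  qed
  have "d^2 \<le> d^3" using d by (simp add: power_increasing)
  have "d * (x * Ln) \<le> d * d" using xL d by (intro mult_left_mono) auto
  also have "\<dots> \<le> d^3" using \<open>d^2 \<le> d^3\<close> by (simp add: power2_eq_square)
  also have "\<dots> \<le> n / 2" using n by simp
  also have "n / 2 \<le> 2 * Ln * Ln * n"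
  proof -
    have "1/2 * (1/2) \<le> Ln * Ln" using Ln by (intro mult_mono) auto
    then have "1/4 * n \<le> (Ln * Ln) * n" using n0 by (intro mult_right_mono) auto
    then show ?thesis by (simp add: algebra_simps)
  qed
  finally have "(d * x) * Ln \<le> (2 * Ln * n) * Ln" by (simp add: algebra_simps)
  then have "d * x \<le> 2 * Ln * n" using Lp by (simp add: mult.commute mult.left_commute)
  then have a: "2 / n \<le> 4 * Ln / (d * x)"
    using n0 dx by (simp add: field_simps)
  have b: "2 / (gam * d * x) \<le> (4 / gam) * Ln / (d * x)"
  proof -
    have gdx: "gam * d * x > 0" using gam dx by (simp add: mult.assoc)
    have "2 / (gam * d * x) \<le> (4 * Ln) / (gam * d * x)"
      using Ln gdx by (intro divide_right_mono) auto
    also have "\<dots> = (4 / gam) * Ln / (d * x)" using gam by (simp add: field_simps)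
    finally show ?thesis .
  qed
  have "(4 + 4 / gam) * Ln / (d * x) = 4 * Ln / (d * x) + (4 / gam) * Ln / (d * x)"
    by (simp add: add_divide_distrib distrib_right)
  then show "Q \<le> (4 + 4 / gam) * Ln / (d * x)" using a b Q by simp
  have C0: "4 + 4 / gam > 0" using gam by (simp add: add_pos_pos)
  have "Ln / d \<le> 1 / ds" using dsL d dsx x by (simp add: field_simps)
  then have "(Ln / d) / x \<le> (1 / ds) / x" using x by (intro divide_right_mono) auto
  then have "Ln / (d * x) \<le> 1 / (ds * x)" by (simp add: divide_divide_eq_left)
  then show "(4 + 4 / gam) * Ln / (d * x) \<le> (4 + 4 / gam) / (ds * x)"
    using C0 by (metis mult_left_mono less_imp_le times_divide_eq_right mult_1_right)
qed



lemma sum3: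
  assumes "finite S" "s \<notin> S" "t \<notin> S" "s \<noteq> t"
  shows "sum f (S \<union> {s, t}) = f s + f t + sum f S"
proof -
  have "S \<union> {s, t} = insert s (insert t S)" by auto
  then show ?thesis using assms by (simp add: algebra_simps)
qed

lemma ind_sum:
  fixes g :: "nat \<Rightarrow> real"
  assumes "finite S" "N \<subseteq> S"
  shows "(\<Sum>v\<in>S. (if v \<in> N then 1 else 0) * g v) = sum g N"
proof -
  have "(\<Sum>v\<in>S. (if v \<in> N then 1 else 0) * g v) = (\<Sum>v\<in>S. if v \<in> N then g v else 0)"
    by (intro sum.cong) auto
  also have "\<dots> = sum g (S \<inter> N)" using assms(1) by (simp add: sum.inter_restrict)
  also have "S \<inter> N = N" using assms(2) by auto
  finally show ?thesis .
qed

locale constr =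
  fixes S1 S2 :: "nat set" and E1 :: "nat \<Rightarrow> nat \<Rightarrow> bool" and N1 N2 :: "nat set" and s t :: nat
  assumes fS1: "finite S1" and fS2: "finite S2" and dis: "S1 \<inter> S2 = {}"
    and sS: "s \<notin> S1 \<union> S2" and tS: "t \<notin> S1 \<union> S2" and st: "s \<noteq> t"
    and Ein: "\<forall>u v. E1 u v \<longrightarrow> u \<in> S1 \<and> v \<in> S1" and Esym: "\<forall>u v. E1 u v = E1 v u"
    and N1S: "N1 \<subseteq> S1" and N2S: "N2 \<subseteq> S2"
begin

definition "A = constr_adj S1 S2 E1 N1 N2 s t"

lemma Asym: "A u v = A v u" unfolding A_def constr_adj_def using Esym by auto
lemma Ann: "A u v \<ge> 0" unfolding A_def constr_adj_def by auto
lemma A11: "u \<in> S1 \<Longrightarrow> v \<in> S1 \<Longrightarrow> A u v = edge_adj E1 u v"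
  using sS tS unfolding A_def constr_adj_def edge_adj_def by auto
lemma A1s: "u \<in> S1 \<Longrightarrow> A s u = (if u \<in> N1 then 1 else 0)"
  using sS tS dis N2S st unfolding A_def constr_adj_def by auto
lemma A2s: "u \<in> S2 \<Longrightarrow> A s u = (if u \<in> N2 then 1 else 0)"
  using sS tS dis N1S st Ein unfolding A_def constr_adj_def by auto
lemma At: "u \<in> S1 \<union> S2 \<Longrightarrow> A t u = 1"
  unfolding A_def constr_adj_def by auto
lemma Ass: "A s s = 0" using sS N1S N2S unfolding A_def constr_adj_def by auto
lemma Ast: "A s t = 0" using sS tS N1S N2S st unfolding A_def constr_adj_def by auto
lemma Att: "A t t = 0" using tS N1S N2S st Ein unfolding A_def constr_adj_def by auto
lemma A22: "u \<in> S2 \<Longrightarrow> v \<in> S2 \<Longrightarrow> A u v = 0"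
  using sS tS dis Ein unfolding A_def constr_adj_def by auto

lemma r2:
  assumes N2ne: "N2 \<noteq> {}"
  shows "eff_res (S2 \<union> {s, t}) A s t = 2 / real (card N2)"
proof -
  define V where "V = S2 \<union> {s, t}"
  have fV: "finite V" unfolding V_def using fS2 by simp
  have sV: "s \<in> V" and tV: "t \<in> V" unfolding V_def by auto
  have sS2: "s \<notin> S2" and tS2: "t \<notin> S2" using sS tS by auto
  obtain w where w: "w \<in> N2" using N2ne by auto
  have wS: "w \<in> S2" using w N2S by auto
  have conn: "\<forall>u\<in>V. \<phi> u = \<phi> t" if h: "\<forall>u\<in>V. \<forall>v\<in>V. A u v \<noteq> 0 \<longrightarrow> \<phi> u = \<phi> v" for \<phi> :: "nat \<Rightarrow> real"
  proof
    fix u assume u: "u \<in> V"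
    have S2t: "\<phi> v = \<phi> t" if "v \<in> S2" for v
    proof -
      have "A v t \<noteq> 0" using At[of v] Asym[of v t] that by simp
      moreover have "v \<in> V" using that unfolding V_def by simp
      ultimately show ?thesis using h tV by blast
    qed
    show "\<phi> u = \<phi> t"
    proof (cases "u = s")
      case True
      have "A s w \<noteq> 0" using A2s[OF wS] w by simp
      moreover have "w \<in> V" using wS unfolding V_def by simp
      ultimately have "\<phi> s = \<phi> w" using h sV by blast
      then show ?thesis using True S2t[OF wS] by simp
    next
      case False
      then have "u = t \<or> u \<in> S2" using u unfolding V_def by auto
      then show ?thesis using S2t by auto
    qed
  qed
  have pi: "is_pinv V (lap V A) (pinv V (lap V A))"
    by (rule lap_pinv_exists[where V=V and A=A and t=t, OF fV tV Asym Ann conn])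
  define k where "k = real (card N2)"
  have k0: "k > 0" unfolding k_def using N2ne N2S fS2 by (simp add: card_gt_0_iff finite_subset)
  define \<phi> where "\<phi> = (\<lambda>u. if u = s then 2 / k else if u \<in> N2 then 1 / k else (0::real))"
  have phis: "\<phi> s = 2 / k" and phit: "\<phi> t = 0" unfolding \<phi>_def using st tS N2S by auto
  have phiS2: "\<phi> v = (if v \<in> N2 then 1 else 0) * (1 / k)" if "v \<in> S2" for v
    unfolding \<phi>_def using that sS2 by auto
  have sumN: "(\<Sum>v\<in>S2. (if v \<in> N2 then 1 else 0) * \<phi> v) = 1"
  proof -
    have "(\<Sum>v\<in>S2. (if v \<in> N2 then 1 else 0) * \<phi> v) = sum \<phi> N2" by (rule ind_sum[OF fS2 N2S])
    also have "\<dots> = (\<Sum>v\<in>N2. 1 / k)" using N2S sS2 unfolding \<phi>_def by (intro sum.cong) auto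
    also have "\<dots> = 1" using k0 unfolding k_def by simp
    finally show ?thesis .
  qed
  have sumphi: "(\<Sum>v\<in>S2. \<phi> v) = 1"
  proof -
    have "(\<Sum>v\<in>S2. \<phi> v) = (\<Sum>v\<in>S2. (if v \<in> N2 then 1 else 0) * \<phi> v)"
      using sS2 unfolding \<phi>_def by (intro sum.cong) auto
    then show ?thesis using sumN by simp
  qed
  have sol: "\<forall>u\<in>V. Lmul V A \<phi> u = (if u = s then 1 else 0) - (if u = t then 1 else 0)"
  proof
    fix u assume u: "u \<in> V"
    have L: "Lmul V A \<phi> u = deg V A u * \<phi> u - (\<Sum>v\<in>V. A u v * \<phi> v)" by (rule Lmul_eq[OF u fV])
    have dsum: "deg V A u = A u s + A u t + (\<Sum>v\<in>S2. A u v)"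
      unfolding deg_def V_def by (rule sum3[OF fS2 sS2 tS2 st])
    have psum: "(\<Sum>v\<in>V. A u v * \<phi> v) = A u s * \<phi> s + A u t * \<phi> t + (\<Sum>v\<in>S2. A u v * \<phi> v)"
      unfolding V_def by (rule sum3[OF fS2 sS2 tS2 st])
    consider "u = s" | "u = t" | "u \<in> S2" using u unfolding V_def by auto
    then show "Lmul V A \<phi> u = (if u = s then 1 else 0) - (if u = t then 1 else 0)"
    proof cases
      case 1
      have "(\<Sum>v\<in>S2. A u v) = k"
        using ind_sum[OF fS2 N2S, of "\<lambda>_. 1"] A2s 1 unfolding k_def by simp
      moreover have "(\<Sum>v\<in>S2. A u v * \<phi> v) = 1"
        using sumN A2s 1 by (simp add: mult.commute)
      ultimately show ?thesis using L dsum psum 1 Ass Ast phis phit k0 st by simp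
    next
      case 2
      have "(\<Sum>v\<in>S2. A u v * \<phi> v) = 1"
        using sumphi At 2 by simp
      then show ?thesis using L psum 2 Asym[of t s] Ast Att phit st by simp
    next
      case 3
      have z: "(\<Sum>v\<in>S2. A u v) = 0" "(\<Sum>v\<in>S2. A u v * \<phi> v) = 0" using A22 3 by simp_all
      have aus: "A u s = (if u \<in> N2 then 1 else 0)" using A2s[OF 3] Asym[of u s] by simp
      have aut: "A u t = 1" using At[of u] 3 Asym[of u t] by simp
      show ?thesis using L dsum psum z aus aut phis phit phiS2[OF 3] 3 sS2 tS2 k0
        by (cases "u \<in> N2") (auto simp: field_simps)
    qed
  qed
  have "eff_res V A s t = \<phi> s - \<phi> t" by (rule eff_res_eq[OF fV sV tV st Asym pi sol])
  then show ?thesis using phis phit unfolding V_def k_def by simp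
qed

lemma r1:
  fixes d ds x :: nat and gam :: real
  assumes d1: "d \<ge> 1" and reg: "\<forall>u\<in>S1. card {v\<in>S1. E1 u v} = d"
    and eig: "second_eig_ge S1 (norm_lap S1 (edge_adj E1)) gam" and gam: "gam > 0"
    and cN1: "card N1 = x" and x0: "0 < x" and xds: "x \<le> ds"
    and dL1: "real d \<ge> real ds * ln (real (card S1))" and n3: "card S1 \<ge> 2 * d ^ 3"
  shows "\<bar>eff_res (S1 \<union> {s, t}) A s t - 1 / real x\<bar> \<le> (4 + 4 / gam) * ln (real (card S1)) / (real d * real x)"
    and "(4 + 4 / gam) * ln (real (card S1)) / (real d * real x) \<le> (4 + 4 / gam) / (real ds * real x)"
proof -
  define V where "V = S1 \<union> {s, t}"
  let ?E = "edge_adj E1"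
  have fV: "finite V" unfolding V_def using fS1 by simp
  have sV: "s \<in> V" and tV: "t \<in> V" unfolding V_def by auto
  have sS1: "s \<notin> S1" and tS1: "t \<notin> S1" using sS tS by auto
  have N1ne: "N1 \<noteq> {}" using cN1 x0 by auto
  obtain w where w: "w \<in> N1" using N1ne by auto
  have wS: "w \<in> S1" using w N1S by auto
  have conn: "\<forall>u\<in>V. \<phi> u = \<phi> t" if h: "\<forall>u\<in>V. \<forall>v\<in>V. A u v \<noteq> 0 \<longrightarrow> \<phi> u = \<phi> v" for \<phi> :: "nat \<Rightarrow> real"
  proof
    fix u assume u: "u \<in> V"
    have S1t: "\<phi> v = \<phi> t" if "v \<in> S1" for v
    proof -
      have "A v t \<noteq> 0" using At[of v] Asym[of v t] that by simp
      moreover have "v \<in> V" using that unfolding V_def by simp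
      ultimately show ?thesis using h tV by blast
    qed
    show "\<phi> u = \<phi> t"
    proof (cases "u = s")
      case True
      have "A s w \<noteq> 0" using A1s[OF wS] w by simp
      moreover have "w \<in> V" using wS unfolding V_def by simp
      ultimately have "\<phi> s = \<phi> w" using h sV by blast
      then show ?thesis using True S1t[OF wS] by simp
    next
      case False
      then have "u = t \<or> u \<in> S1" using u unfolding V_def by auto
      then show ?thesis using S1t by auto
    qed
  qed
  have pi: "is_pinv V (lap V A) (pinv V (lap V A))"
    by (rule lap_pinv_exists[where V=V and A=A and t=t, OF fV tV Asym Ann conn])
  define b where "b = (\<lambda>u. (if u = s then 1 else 0) - (if u = t then 1 else (0::real)))"
  have bsum: "(\<Sum>u\<in>V. b u) = 0"
  proof -
    have "(\<Sum>u\<in>V. b u) = b s + b t + (\<Sum>u\<in>S1. b u)" unfolding V_def by (rule sum3[OF fS1 sS1 tS1 st])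
    moreover have "(\<Sum>u\<in>S1. b u) = 0" unfolding b_def using sS1 tS1 by (intro sum.neutral) auto
    ultimately show ?thesis unfolding b_def using st by simp
  qed
  obtain \<phi> where phit: "\<phi> t = 0" and sol: "\<forall>u\<in>V. Lmul V A \<phi> u = b u"
    using lap_solve[where V=V and A=A and t=t and c=b, OF fV tV Asym Ann conn bsum] by blast
  have R: "eff_res V A s t = \<phi> s"
    using eff_res_eq[OF fV sV tV st Asym pi, of \<phi>] sol phit unfolding b_def by simp
  define a where "a = \<phi> s"
  define P where "P = sum \<phi> N1"
  define xr where "xr = real x"
  have xr0: "xr > 0" unfolding xr_def using x0 by simp
  have eqs: "xr * a - P = 1"
  proof -
    have L: "Lmul V A \<phi> s = deg V A s * \<phi> s - (\<Sum>v\<in>V. A s v * \<phi> v)" by (rule Lmul_eq[OF sV fV])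
    have "deg V A s = A s s + A s t + (\<Sum>v\<in>S1. A s v)"
      unfolding deg_def V_def by (rule sum3[OF fS1 sS1 tS1 st])
    also have "(\<Sum>v\<in>S1. A s v) = (\<Sum>v\<in>S1. (if v \<in> N1 then 1 else 0) * 1)"
      using A1s by (intro sum.cong) auto
    also have "\<dots> = real (card N1)" using ind_sum[OF fS1 N1S, of "\<lambda>_. 1"] by simp
    finally have dg: "deg V A s = xr" using Ass Ast cN1 unfolding xr_def by simp
    have "(\<Sum>v\<in>V. A s v * \<phi> v) = A s s * \<phi> s + A s t * \<phi> t + (\<Sum>v\<in>S1. A s v * \<phi> v)"
      unfolding V_def by (rule sum3[OF fS1 sS1 tS1 st])
    also have "(\<Sum>v\<in>S1. A s v * \<phi> v) = (\<Sum>v\<in>S1. (if v \<in> N1 then 1 else 0) * \<phi> v)"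
      using A1s by (intro sum.cong) auto
    also have "\<dots> = P" unfolding P_def by (rule ind_sum[OF fS1 N1S])
    finally have ps: "(\<Sum>v\<in>V. A s v * \<phi> v) = P" using Ass Ast by simp
    have "Lmul V A \<phi> s = 1" using sol sV st unfolding b_def by simp
    then show ?thesis using L dg ps unfolding a_def by simp
  qed
  have degE: "deg S1 ?E u = real d" if "u \<in> S1" for u using deg_edge_adj[OF fS1] reg that by simp
  have equ: "Lmul S1 ?E \<phi> u = (if u \<in> N1 then 1 else 0) * (a - \<phi> u) - \<phi> u" if u: "u \<in> S1" for u
  proof -
    have uV: "u \<in> V" using u unfolding V_def by simp
    have L: "Lmul V A \<phi> u = deg V A u * \<phi> u - (\<Sum>v\<in>V. A u v * \<phi> v)" by (rule Lmul_eq[OF uV fV])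
    have aus: "A u s = (if u \<in> N1 then 1 else 0)" using A1s[OF u] Asym[of u s] by simp
    have aut: "A u t = 1" using At[of u] u Asym[of u t] by simp
    have e1: "(\<Sum>v\<in>S1. A u v) = deg S1 ?E u" unfolding deg_def using A11[OF u] by simp
    have e2: "(\<Sum>v\<in>S1. A u v * \<phi> v) = (\<Sum>v\<in>S1. ?E u v * \<phi> v)" using A11[OF u] by simp
    have dg: "deg V A u = A u s + A u t + (\<Sum>v\<in>S1. A u v)"
      unfolding deg_def V_def by (rule sum3[OF fS1 sS1 tS1 st])
    have ps: "(\<Sum>v\<in>V. A u v * \<phi> v) = A u s * \<phi> s + A u t * \<phi> t + (\<Sum>v\<in>S1. A u v * \<phi> v)"
      unfolding V_def by (rule sum3[OF fS1 sS1 tS1 st])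
    have "Lmul V A \<phi> u = 0" using sol uV u sS1 tS1 unfolding b_def by auto
    moreover have "Lmul S1 ?E \<phi> u = deg S1 ?E u * \<phi> u - (\<Sum>v\<in>S1. ?E u v * \<phi> v)" by (rule Lmul_eq[OF u fS1])
    ultimately show ?thesis using L aus aut e1 e2 dg ps phit unfolding a_def
      by (simp add: algebra_simps)
  qed
  define Q2 where "Q2 = (\<Sum>u\<in>N1. (\<phi> u)^2)"
  define S2s where "S2s = (\<Sum>u\<in>S1. (\<phi> u)^2)"
  have Eid: "En S1 ?E \<phi> = a * P - Q2 - S2s"
  proof -
    have "En S1 ?E \<phi> = (\<Sum>u\<in>S1. (if u \<in> N1 then 1 else 0) * (a * \<phi> u - (\<phi> u)^2) - (\<phi> u)^2)"
      unfolding En_def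
    proof (intro sum.cong refl)
      fix u assume u: "u \<in> S1"
      show "\<phi> u * Lmul S1 ?E \<phi> u = (if u \<in> N1 then 1 else 0) * (a * \<phi> u - (\<phi> u)^2) - (\<phi> u)^2"
        unfolding equ[OF u] by (cases "u \<in> N1") (simp_all add: algebra_simps power2_eq_square)
    qed
    also have "\<dots> = (\<Sum>u\<in>N1. a * \<phi> u - (\<phi> u)^2) - S2s"
      unfolding S2s_def sum_subtractf ind_sum[OF fS1 N1S] ..
    also have "\<dots> = a * P - Q2 - S2s" unfolding P_def Q2_def by (simp add: sum_subtractf sum_distrib_left)
    finally show ?thesis .
  qed
  define nr where "nr = real (card S1)"
  have d3: "d ^ 3 \<ge> 1" using d1 by simp
  have cS2: "card S1 \<ge> 2" using n3 d3 by linarith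
  have nr0: "nr > 0" unfolding nr_def using cS2 by simp
  define m where "m = (\<Sum>v\<in>S1. \<phi> v) / nr"
  define W2 where "W2 = (\<Sum>u\<in>S1. (\<phi> u - m)^2)"
  have PC: "En S1 ?E \<phi> \<ge> gam * d * W2"
    unfolding W2_def m_def nr_def
    by (rule poincare[OF fS1 cS2 _ d1 reg eig gam]) (use Esym in auto)
  have W0: "W2 \<ge> 0" unfolding W2_def by (intro sum_nonneg) auto
  have SS: "S2s = W2 + nr * m^2"
  proof -
    have sm: "(\<Sum>v\<in>S1. \<phi> v) = nr * m" unfolding m_def using nr0 by simp
    have "W2 = S2s - 2 * m * (\<Sum>v\<in>S1. \<phi> v) + nr * m^2"
      unfolding W2_def S2s_def nr_def
      by (simp add: power2_diff sum.distrib sum_subtractf sum_distrib_left[symmetric] mult.assoc,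
          simp add: sum_distrib_left mult.commute)
    then show ?thesis using sm by (simp add: power2_eq_square algebra_simps)
  qed
  have CS1: "P^2 \<le> xr * Q2" unfolding P_def Q2_def xr_def using cs_sum[of N1 \<phi>] N1S fS1 cN1
    by (simp add: finite_subset)
  define T where "T = (\<Sum>u\<in>N1. \<phi> u - m)"
  have PT: "P = xr * m + T" unfolding T_def P_def xr_def using cN1 by (simp add: sum_subtractf)
  have CS2: "T^2 \<le> xr * W2"
  proof -
    have "T^2 \<le> xr * (\<Sum>u\<in>N1. (\<phi> u - m)^2)" unfolding T_def xr_def
      using cs_sum[of N1 "\<lambda>u. \<phi> u - m"] N1S fS1 cN1 by (simp add: finite_subset)
    also have "\<dots> \<le> xr * W2" unfolding W2_def using xr0 N1S fS1
      by (intro mult_left_mono sum_mono2) auto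
    finally show ?thesis .
  qed
  have Q2lb: "P^2 / xr \<le> Q2" using CS1 xr0 by (simp add: divide_le_eq mult.commute)
  have aP: "a * P = P / xr + P^2 / xr"
  proof -
    have "a = (1 + P) / xr" using eqs xr0 by (simp add: field_simps)
    then show ?thesis by (simp add: power2_eq_square add_divide_distrib distrib_right)
  qed
  have main: "P / xr \<ge> (gam * d) * W2 + nr * m^2"
  proof -
    have "a * P = En S1 ?E \<phi> + Q2 + S2s" using Eid by simp
    then have "P / xr + P^2 / xr \<ge> gam * d * W2 + P^2 / xr + W2 + nr * m^2"
      using aP PC Q2lb SS by linarith
    then show ?thesis using W0 by simp
  qed
  have gd: "gam * d > 0" using gam d1 by simp
  have PB: "0 \<le> P" "P \<le> 2 * xr / nr + 2 / (gam * d)"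
    using P_bound[OF xr0 nr0 gd PT CS2 W0 main] by auto
  have diff: "eff_res V A s t - 1 / xr = P / xr"
    using R eqs xr0 unfolding a_def by (simp add: field_simps)
  have Qb: "P / xr \<le> 2 / nr + 2 / (gam * d * xr)"
  proof -
    have "P / xr \<le> (2 * xr / nr + 2 / (gam * d)) / xr" using PB xr0 by (simp add: divide_right_mono)
    also have "\<dots> = 2 / nr + 2 / (gam * d * xr)" using xr0 nr0 gd by (simp add: field_simps)
    finally show ?thesis .
  qed
  have Ln: "ln nr \<ge> 1/2"
  proof -
    have "ln 2 \<le> ln nr" using cS2 unfolding nr_def by simp
    then show ?thesis using ln2_ge_half by simp
  qed
  have nrd: "nr \<ge> 2 * real d ^ 3" unfolding nr_def using n3
    by (metis of_nat_le_iff of_nat_mult of_nat_numeral of_nat_power)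
  have xr1: "xr \<ge> 1" unfolding xr_def using x0 by simp
  have dsx: "real ds \<ge> xr" unfolding xr_def using xds by simp
  have F: "P / xr \<le> (4 + 4 / gam) * ln nr / (real d * xr)"
       "(4 + 4 / gam) * ln nr / (real d * xr) \<le> (4 + 4 / gam) / (real ds * xr)"
    using final_arith[OF xr1 _ dsx nrd Ln _ gam Qb] d1 dL1 unfolding nr_def by auto
  have "\<bar>eff_res V A s t - 1 / xr\<bar> = P / xr" using diff PB xr0 by simp
  then show "\<bar>eff_res (S1 \<union> {s, t}) A s t - 1 / real x\<bar> \<le> (4 + 4 / gam) * ln (real (card S1)) / (real d * real x)"
    using F(1) unfolding V_def xr_def nr_def by simp
  show "(4 + 4 / gam) * ln (real (card S1)) / (real d * real x) \<le> (4 + 4 / gam) / (real ds * real x)"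
    using F(2) unfolding xr_def nr_def by simp
qed

end



lemma main_inst:
  fixes gam :: real and S1 S2 :: "nat set" and E1 N1 N2 s t and d ds x :: nat
  assumes gam: "gam > 0"
    and "finite S1" "finite S2" "S1 \<inter> S2 = {}" "s \<notin> S1 \<union> S2" "t \<notin> S1 \<union> S2" "s \<noteq> t"
    "\<forall>u v. E1 u v \<longrightarrow> u \<in> S1 \<and> v \<in> S1" "\<forall>u v. E1 u v = E1 v u" "\<forall>u. \<not> E1 u u"
    "d \<ge> 1" "\<forall>u\<in>S1. card {v\<in>S1. E1 u v} = d"
    "second_eig_ge S1 (norm_lap S1 (edge_adj E1)) gam"
    "N1 \<subseteq> S1" "card N1 = x" "N2 \<subseteq> S2" "card N2 = ds - x"
    "0 < x" "x \<le> ds"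
    "real d \<ge> real ds * ln (real (card S1))" "real d \<ge> (ln (real (card S1)))\<^sup>2"
    "card S1 \<ge> 2 * d ^ 3"
  shows "let A = constr_adj S1 S2 E1 N1 N2 s t;
             r1 = eff_res (S1 \<union> {s, t}) A s t;
             r2 = eff_res (S2 \<union> {s, t}) A s t
         in \<bar>r1 - 1 / real x\<bar> \<le> (4 + 4 / gam) * ln (real (card S1)) / (real d * real x)
          \<and> \<bar>r1 - 1 / real x\<bar> \<le> (4 + 4 / gam) / (real ds * real x)
          \<and> (x < ds \<longrightarrow> r2 = 2 / (real ds - real x))"
proof -
  interpret constr S1 S2 E1 N1 N2 s t
    by unfold_locales (use assms in auto)
  have R1: "\<bar>eff_res (S1 \<union> {s, t}) A s t - 1 / real x\<bar> \<le> (4 + 4 / gam) * ln (real (card S1)) / (real d * real x)"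
    "(4 + 4 / gam) * ln (real (card S1)) / (real d * real x) \<le> (4 + 4 / gam) / (real ds * real x)"
    using r1[where d=d and ds=ds and x=x and gam=gam] assms by auto
  have R2: "eff_res (S2 \<union> {s, t}) A s t = 2 / (real ds - real x)" if "x < ds"
  proof -
    have "card N2 > 0" using that assms by simp
    then have "N2 \<noteq> {}" by auto
    from r2[OF this] show ?thesis using that assms by (simp add: of_nat_diff)
  qed
  show ?thesis unfolding Let_def A_def[symmetric] using R1 R2 by auto
qed

theorem lemma5p1:
  fixes gam :: real
  assumes "gam > 0"
  shows "\<exists>C>0. \<forall>(S1::nat set) S2 E1 N1 N2 s t (d::nat) (ds::nat) (x::nat).
    finite S1 \<and> finite S2 \<and> S1 \<inter> S2 = {} \<and> s \<notin> S1 \<union> S2 \<and> t \<notin> S1 \<union> S2 \<and> s \<noteq> t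
    \<and> (\<forall>u v. E1 u v \<longrightarrow> u \<in> S1 \<and> v \<in> S1) \<and> (\<forall>u v. E1 u v = E1 v u) \<and> (\<forall>u. \<not> E1 u u)
    \<and> d \<ge> 1 \<and> (\<forall>u\<in>S1. card {v\<in>S1. E1 u v} = d)
    \<and> second_eig_ge S1 (norm_lap S1 (edge_adj E1)) gam
    \<and> N1 \<subseteq> S1 \<and> card N1 = x \<and> N2 \<subseteq> S2 \<and> card N2 = ds - x
    \<and> 0 < x \<and> x \<le> ds
    \<and> real d \<ge> real ds * ln (real (card S1)) \<and> real d \<ge> (ln (real (card S1)))\<^sup>2
    \<and> card S1 \<ge> 2 * d ^ 3
    \<longrightarrow> (let A = constr_adj S1 S2 E1 N1 N2 s t;
             r1 = eff_res (S1 \<union> {s, t}) A s t;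
             r2 = eff_res (S2 \<union> {s, t}) A s t
         in \<bar>r1 - 1 / real x\<bar> \<le> C * ln (real (card S1)) / (real d * real x)
          \<and> \<bar>r1 - 1 / real x\<bar> \<le> C / (real ds * real x)
          \<and> (x < ds \<longrightarrow> r2 = 2 / (real ds - real x)))"
proof (intro exI[of _ "4 + 4 / gam"] conjI allI impI)
  show "4 + 4 / gam > 0" using assms by (simp add: add_pos_pos)
next
  fix S1 S2 :: "nat set" and E1 N1 N2 s t and d ds x :: nat
  assume H: "finite S1 \<and> finite S2 \<and> S1 \<inter> S2 = {} \<and> s \<notin> S1 \<union> S2 \<and> t \<notin> S1 \<union> S2 \<and> s \<noteq> t
    \<and> (\<forall>u v. E1 u v \<longrightarrow> u \<in> S1 \<and> v \<in> S1) \<and> (\<forall>u v. E1 u v = E1 v u) \<and> (\<forall>u. \<not> E1 u u)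
    \<and> d \<ge> 1 \<and> (\<forall>u\<in>S1. card {v\<in>S1. E1 u v} = d)
    \<and> second_eig_ge S1 (norm_lap S1 (edge_adj E1)) gam
    \<and> N1 \<subseteq> S1 \<and> card N1 = x \<and> N2 \<subseteq> S2 \<and> card N2 = ds - x
    \<and> 0 < x \<and> x \<le> ds
    \<and> real d \<ge> real ds * ln (real (card S1)) \<and> real d \<ge> (ln (real (card S1)))\<^sup>2
    \<and> card S1 \<ge> 2 * d ^ 3"
  show "let A = constr_adj S1 S2 E1 N1 N2 s t;
             r1 = eff_res (S1 \<union> {s, t}) A s t;
             r2 = eff_res (S2 \<union> {s, t}) A s t
         in \<bar>r1 - 1 / real x\<bar> \<le> (4 + 4 / gam) * ln (real (card S1)) / (real d * real x)
          \<and> \<bar>r1 - 1 / real x\<bar> \<le> (4 + 4 / gam) / (real ds * real x)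
          \<and> (x < ds \<longrightarrow> r2 = 2 / (real ds - real x))"
    using H by (intro main_inst[OF assms]) auto
qed


end
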